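(* Let $\alpha$ be a QCA on $\mathrm{Mat}(\mathbb{Z}^D,p)$ with spread $\ell>1$ (more generally, any $\ell>1$ that bounds its spread), and $n\in\mathbb{Z}$. Then the boundary algebra $\mathcal B(n,\ell)=\alpha(\mathrm{Mat}(H(n),p))\cap\mathrm{Mat}(S(n,\ell),p)$, regarded as a subalgebra of a local operator algebra on $\mathbb{Z}^{D-1}$, is an invertible subalgebra. If the QCA has spread at most $\ell$, then this invertible subalgebra has spread at most $2\ell$.
   Context: For $p:\mathbb{Z}^D\to\mathbb{Z}_{>0}$ and finite $F$, $\mathrm{Mat}(F,p)=\bigotimes_{s\in F}M_{p(s)}(\mathbb{C})$ with embeddings by tensoring identities; $\mathrm{Mat}(\mathbb{Z}^D,p)$ is the union, and for arbitrary $S$, $\mathrm{Mat}(S,p)$ is the union of $\mathrm{Mat}(F,p)$ over finite $F\subseteq S$. $\mathrm{Supp}(x)$ is the smallest finite set $F$ with $x\in\mathrm{Mat}(F,p)$; $S^{+\ell}$ is the set of sites at $\ell_\infty$-distance at most $\ell$ from $S$. A QCA is a $*$-automorphism $\alpha$ of $\mathrm{Mat}(\mathbb{Z}^D,p)$ with some $\ell>0$ (spread) such that $\mathrm{Supp}(\alpha(x))\subseteq\mathrm{Supp}(x)^{+\ell}$ for all $x$. Put $H(n)=(\mathbb{Z}\cap(-\infty,n])\times\mathbb{Z}^{D-1}$ and $S(n,\ell)=(\mathbb{Z}\cap[n-\ell+1,n+\ell])\times\mathbb{Z}^{D-1}$. The algebra $\mathrm{Mat}(S(n,\ell),p)$ is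 identified with the local operator algebra $\mathrm{Mat}(\mathbb{Z}^{D-1},p')$ where the site $y\in\mathbb{Z}^{D-1}$ combines the sites $\{n-\ell+1,\dots,n+\ell\}\times\{y\}$, i.e. $p'(y)=\prod_{j=n-\ell+1}^{n+\ell}p(j,y)$. A unital $*$-subalgebra $\mathcal A$ of $\mathrm{Mat}(\mathbb{Z}^{D-1},p')$ is invertible with spread $m$ if every $x\in\mathrm{Mat}(\mathbb{Z}^{D-1},p')$ is a finite sum $x=\sum_ia_ib_i$ with $a_i\in\mathcal A$, $b_i$ in the commutant of $\mathcal A$ within $\mathrm{Mat}(\mathbb{Z}^{D-1},p')$, and $\mathrm{Supp}(a_i),\mathrm{Supp}(b_i)\subseteq\mathrm{Supp}(x)^{+m}$. *)

theory Defs
  imports Complex_Main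
begin

text \<open>Sites of Z^D are integer lists of length D; the first entry is the
distinguished coordinate used for half-spaces and strips.\<close>

type_synonym site = "int list"
type_synonym cfg = "site \<Rightarrow> nat"
text \<open>A (global, infinite) configuration assigns to each site s a basis index below p s.
An operator is a matrix kernel indexed by pairs of configurations.\<close>
type_synonym op = "cfg \<Rightarrow> cfg \<Rightarrow> complex"

definition sites :: "nat \<Rightarrow> site set" where
  "sites D = {s. length s = D}"

definition cfgs :: "nat \<Rightarrow> (site \<Rightarrow> nat) \<Rightarrow> cfg set" where
  "cfgs D p = {\<sigma>. (\<forall>s\<in>sites D. \<sigma> s < p s) \<and> (\<forall>s. s \<notin> sites D \<longrightarrow> \<sigma> s = 0)}"

text \<open>x is (the embedding of) an element of Mat(F,p) = tensor over s in F of M_{p(s)},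
i.e. x = x_F \<otimes> identity on the complement of F.\<close>
definition local_on :: "nat \<Rightarrow> (site \<Rightarrow> nat) \<Rightarrow> site set \<Rightarrow> op \<Rightarrow> bool" where
  "local_on D p F x \<longleftrightarrow> finite F \<and> F \<subseteq> sites D \<and>
     (\<forall>\<sigma> \<tau>. x \<sigma> \<tau> \<noteq> 0 \<longrightarrow> \<sigma> \<in> cfgs D p \<and> \<tau> \<in> cfgs D p \<and> (\<forall>s. s \<notin> F \<longrightarrow> \<sigma> s = \<tau> s)) \<and>
     (\<forall>\<sigma> \<tau> \<sigma>' \<tau>'. \<sigma> \<in> cfgs D p \<and> \<tau> \<in> cfgs D p \<and> \<sigma>' \<in> cfgs D p \<and> \<tau>' \<in> cfgs D p \<and>
        (\<forall>s. s \<notin> F \<longrightarrow> \<sigma> s = \<tau> s) \<and> (\<forall>s. s \<notin> F \<longrightarrow> \<sigma>' s = \<tau>' s) \<and>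
        (\<forall>s\<in>F. \<sigma> s = \<sigma>' s \<and> \<tau> s = \<tau>' s) \<longrightarrow> x \<sigma> \<tau> = x \<sigma>' \<tau>')"

definition Mat :: "nat \<Rightarrow> (site \<Rightarrow> nat) \<Rightarrow> site set \<Rightarrow> op set" where
  "Mat D p S = {x. \<exists>F. F \<subseteq> S \<and> finite F \<and> local_on D p F x}"

definition Supp :: "nat \<Rightarrow> (site \<Rightarrow> nat) \<Rightarrow> op \<Rightarrow> site set" where
  "Supp D p x = \<Inter> {F. local_on D p F x}"

definition op_mult :: "op \<Rightarrow> op \<Rightarrow> op" where
  "op_mult x y = (\<lambda>\<sigma> \<tau>. \<Sum>\<rho>\<in>{\<rho>. x \<sigma> \<rho> \<noteq> 0}. x \<sigma> \<rho> * y \<rho> \<tau>)"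

definition op_add :: "op \<Rightarrow> op \<Rightarrow> op" where
  "op_add x y = (\<lambda>\<sigma> \<tau>. x \<sigma> \<tau> + y \<sigma> \<tau>)"

definition op_scale :: "complex \<Rightarrow> op \<Rightarrow> op" where
  "op_scale c x = (\<lambda>\<sigma> \<tau>. c * x \<sigma> \<tau>)"

definition op_adj :: "op \<Rightarrow> op" where
  "op_adj x = (\<lambda>\<sigma> \<tau>. cnj (x \<tau> \<sigma>))"

definition op_one :: "nat \<Rightarrow> (site \<Rightarrow> nat) \<Rightarrow> op" where
  "op_one D p = (\<lambda>\<sigma> \<tau>. if \<sigma> = \<tau> \<and> \<sigma> \<in> cfgs D p then 1 else 0)"

definition op_zero :: op where
  "op_zero = (\<lambda>\<sigma> \<tau>. 0)"

definition op_sum_prods :: "(op \<times> op) list \<Rightarrow> op" where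
  "op_sum_prods ab = foldr (\<lambda>(a, b) acc. op_add (op_mult a b) acc) ab op_zero"

definition site_dist :: "site \<Rightarrow> site \<Rightarrow> int" where
  "site_dist s t = foldr max (map (\<lambda>(a, b). \<bar>a - b\<bar>) (zip s t)) 0"

definition nbhd :: "nat \<Rightarrow> int \<Rightarrow> site set \<Rightarrow> site set" where
  "nbhd D l S = {t \<in> sites D. \<exists>s\<in>S. site_dist s t \<le> l}"

definition is_QCA :: "nat \<Rightarrow> (site \<Rightarrow> nat) \<Rightarrow> int \<Rightarrow> (op \<Rightarrow> op) \<Rightarrow> bool" where
  "is_QCA D p l \<alpha> \<longleftrightarrow>
     l > 0 \<and>
     bij_betw \<alpha> (Mat D p (sites D)) (Mat D p (sites D)) \<and>
     (\<forall>x\<in>Mat D p (sites D). \<forall>y\<in>Mat D p (sites D).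
        \<alpha> (op_add x y) = op_add (\<alpha> x) (\<alpha> y) \<and> \<alpha> (op_mult x y) = op_mult (\<alpha> x) (\<alpha> y)) \<and>
     (\<forall>x\<in>Mat D p (sites D). \<forall>c. \<alpha> (op_scale c x) = op_scale c (\<alpha> x)) \<and>
     (\<forall>x\<in>Mat D p (sites D). \<alpha> (op_adj x) = op_adj (\<alpha> x)) \<and>
     \<alpha> (op_one D p) = op_one D p \<and>
     (\<forall>x\<in>Mat D p (sites D). Supp D p (\<alpha> x) \<subseteq> nbhd D l (Supp D p x))"

definition half_space :: "nat \<Rightarrow> int \<Rightarrow> site set" where
  "half_space D n = {s \<in> sites D. hd s \<le> n}"

definition strip :: "nat \<Rightarrow> int \<Rightarrow> int \<Rightarrow> site set" where
  "strip D n l = {s \<in> sites D. n - l + 1 \<le> hd s \<and> hd s \<le> n + l}"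

definition boundary_algebra :: "nat \<Rightarrow> (site \<Rightarrow> nat) \<Rightarrow> (op \<Rightarrow> op) \<Rightarrow> int \<Rightarrow> int \<Rightarrow> op set" where
  "boundary_algebra D p \<alpha> n l = \<alpha> ` Mat D p (half_space D n) \<inter> Mat D p (strip D n l)"

definition unital_star_subalg :: "nat \<Rightarrow> (site \<Rightarrow> nat) \<Rightarrow> op set \<Rightarrow> op set \<Rightarrow> bool" where
  "unital_star_subalg D p M A \<longleftrightarrow> A \<subseteq> M \<and> op_one D p \<in> A \<and>
     (\<forall>a\<in>A. \<forall>b\<in>A. op_add a b \<in> A \<and> op_mult a b \<in> A) \<and>
     (\<forall>a\<in>A. \<forall>c. op_scale c a \<in> A) \<and> (\<forall>a\<in>A. op_adj a \<in> A)"

text \<open>Invertible subalgebra with spread m of Mat(S(n,l),p), viewed as the local algebra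
Mat(Z^(D-1),p') on combined sites y (the column {n-l+1..n+l} x {y}).  An operator
supported in the strip has Z^(D-1)-support equal to the projection (tl) of its
Z^D-support, and neighbourhoods are taken in Z^(D-1).\<close>
definition invertible_strip_subalg ::
  "nat \<Rightarrow> (site \<Rightarrow> nat) \<Rightarrow> int \<Rightarrow> int \<Rightarrow> op set \<Rightarrow> int \<Rightarrow> bool" where
  "invertible_strip_subalg D p n l A m \<longleftrightarrow>
     unital_star_subalg D p (Mat D p (strip D n l)) A \<and>
     (\<forall>x\<in>Mat D p (strip D n l). \<exists>ab :: (op \<times> op) list.
        x = op_sum_prods ab \<and>
        (\<forall>(a, b)\<in>set ab.
           a \<in> A \<and>
           b \<in> Mat D p (strip D n l) \<and> (\<forall>a'\<in>A. op_mult a' b = op_mult b a') \<and>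
           tl ` Supp D p a \<subseteq> nbhd (D - 1) m (tl ` Supp D p x) \<and>
           tl ` Supp D p b \<subseteq> nbhd (D - 1) m (tl ` Supp D p x)))"

end

theory Submission
  imports Defs "HOL-Library.FuncSet"
begin

context fixes D :: nat and p :: "site \<Rightarrow> nat" begin

abbreviation "CC \<equiv> cfgs D p"
abbreviation "loc \<equiv> local_on D p"

definition RR :: "site set \<Rightarrow> cfg \<Rightarrow> cfg set" where
  "RR F \<sigma> = {\<rho> \<in> cfgs D p. \<forall>t. t \<notin> F \<longrightarrow> \<rho> t = \<sigma> t}"

lemma finite_RR: assumes "finite F" "F \<subseteq> sites D" shows "finite (RR F \<sigma>)"
proof -
  have inj: "inj_on (\<lambda>\<rho>. restrict \<rho> F) (RR F \<sigma>)"
  proof (rule inj_onI)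
    fix a b assume a: "a \<in> RR F \<sigma>" and b: "b \<in> RR F \<sigma>" and e: "restrict a F = restrict b F"
    show "a = b"
    proof
      fix t show "a t = b t"
      proof (cases "t \<in> F")
        case True then show ?thesis using e by (metis restrict_apply')
      next
        case False then show ?thesis using a b by (auto simp: RR_def)
      qed
    qed
  qed
  have "(\<lambda>\<rho>. restrict \<rho> F) ` RR F \<sigma> \<subseteq> (\<Pi>\<^sub>E s\<in>F. {..<p s})"
    using assms(2) by (auto simp: RR_def cfgs_def)
  moreover have "finite (\<Pi>\<^sub>E s\<in>F. {..<p s})" using assms(1) by (intro finite_PiE) auto
  ultimately have "finite ((\<lambda>\<rho>. restrict \<rho> F) ` RR F \<sigma>)" by (rule finite_subset)
  then show ?thesis using inj finite_imageD by blast
qed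

lemma loc_D:
  assumes "loc F x"
  shows "finite F \<and> F \<subseteq> sites D \<and>
     (\<forall>\<sigma> \<tau>. x \<sigma> \<tau> \<noteq> 0 \<longrightarrow> \<sigma> \<in> CC \<and> \<tau> \<in> CC \<and> (\<forall>s. s \<notin> F \<longrightarrow> \<sigma> s = \<tau> s)) \<and>
     (\<forall>\<sigma> \<tau> \<sigma>' \<tau>'. \<sigma> \<in> CC \<and> \<tau> \<in> CC \<and> \<sigma>' \<in> CC \<and> \<tau>' \<in> CC \<and>
        (\<forall>s. s \<notin> F \<longrightarrow> \<sigma> s = \<tau> s) \<and> (\<forall>s. s \<notin> F \<longrightarrow> \<sigma>' s = \<tau>' s) \<and>
        (\<forall>s\<in>F. \<sigma> s = \<sigma>' s \<and> \<tau> s = \<tau>' s) \<longrightarrow> x \<sigma> \<tau> = x \<sigma>' \<tau>')"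
  using assms unfolding local_on_def .

lemma loc_nz: assumes "loc F x" "x \<sigma> \<rho> \<noteq> 0" shows "\<sigma> \<in> CC \<and> \<rho> \<in> CC \<and> (\<forall>t. t\<notin>F \<longrightarrow> \<sigma> t = \<rho> t)"
proof -
  have "\<forall>\<sigma> \<tau>. x \<sigma> \<tau> \<noteq> 0 \<longrightarrow> \<sigma> \<in> CC \<and> \<tau> \<in> CC \<and> (\<forall>s. s \<notin> F \<longrightarrow> \<sigma> s = \<tau> s)"
    by (rule conjunct1[OF conjunct2[OF conjunct2[OF loc_D[OF assms(1)]]]])
  from this[rule_format, OF assms(2)] show ?thesis .
qed

lemma loc_fin: "loc F x \<Longrightarrow> finite F"
  by (drule loc_D) (erule conjunct1)
lemma loc_sites: "loc F x \<Longrightarrow> F \<subseteq> sites D"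
  by (drule loc_D) (erule conjunct1[OF conjunct2])

lemma loc_eq: assumes "loc F x" "\<sigma> \<in> CC" "\<tau> \<in> CC" "\<sigma>' \<in> CC" "\<tau>' \<in> CC"
   "\<forall>t. t \<notin> F \<longrightarrow> \<sigma> t = \<tau> t" "\<forall>t. t \<notin> F \<longrightarrow> \<sigma>' t = \<tau>' t"
   "\<forall>t\<in>F. \<sigma> t = \<sigma>' t \<and> \<tau> t = \<tau>' t" shows "x \<sigma> \<tau> = x \<sigma>' \<tau>'"
proof -
  have H: "\<forall>\<sigma> \<tau> \<sigma>' \<tau>'. \<sigma> \<in> CC \<and> \<tau> \<in> CC \<and> \<sigma>' \<in> CC \<and> \<tau>' \<in> CC \<and>
        (\<forall>s. s \<notin> F \<longrightarrow> \<sigma> s = \<tau> s) \<and> (\<forall>s. s \<notin> F \<longrightarrow> \<sigma>' s = \<tau>' s) \<and>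
        (\<forall>s\<in>F. \<sigma> s = \<sigma>' s \<and> \<tau> s = \<tau>' s) \<longrightarrow> x \<sigma> \<tau> = x \<sigma>' \<tau>'"
    by (rule conjunct2[OF conjunct2[OF conjunct2[OF loc_D[OF assms(1)]]]])
  show ?thesis
    apply (rule H[rule_format])
    using assms(2-8) by (intro conjI)
qed

lemma locI:
  assumes "finite F" "F \<subseteq> sites D"
    "\<And>\<sigma> \<tau>. x \<sigma> \<tau> \<noteq> 0 \<Longrightarrow> \<sigma> \<in> CC \<and> \<tau> \<in> CC \<and> (\<forall>t. t\<notin>F \<longrightarrow> \<sigma> t = \<tau> t)"
    "\<And>\<sigma> \<tau> \<sigma>' \<tau>'. \<sigma> \<in> CC \<Longrightarrow> \<tau> \<in> CC \<Longrightarrow> \<sigma>' \<in> CC \<Longrightarrow> \<tau>' \<in> CC \<Longrightarrow>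
   (\<forall>t. t \<notin> F \<longrightarrow> \<sigma> t = \<tau> t) \<Longrightarrow> (\<forall>t. t \<notin> F \<longrightarrow> \<sigma>' t = \<tau>' t) \<Longrightarrow>
   (\<forall>t\<in>F. \<sigma> t = \<sigma>' t \<and> \<tau> t = \<tau>' t) \<Longrightarrow> x \<sigma> \<tau> = x \<sigma>' \<tau>'"
  shows "loc F x"
  unfolding local_on_def
  apply (intro conjI assms(1,2) allI impI)
  subgoal using assms(3) by blast
  subgoal using assms(3) by blast
  subgoal using assms(3) by blast
  subgoal by (elim conjE, rule assms(4), assumption+)
  done

lemma mult_A: assumes "finite A" "{\<rho>. x \<sigma> \<rho> \<noteq> 0} \<subseteq> A"
  shows "op_mult x y \<sigma> \<tau> = (\<Sum>\<rho>\<in>A. x \<sigma> \<rho> * y \<rho> \<tau>)"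
  unfolding op_mult_def
proof (rule sum.mono_neutral_left[OF assms])
  show "\<forall>i\<in>A - {\<rho>. x \<sigma> \<rho> \<noteq> 0}. x \<sigma> i * y i \<tau> = 0" by simp
qed

lemma nz_RR: assumes "loc F x" shows "{\<rho>. x \<sigma> \<rho> \<noteq> 0} \<subseteq> RR F \<sigma>"
proof
  fix \<rho> assume "\<rho> \<in> {\<rho>. x \<sigma> \<rho> \<noteq> 0}"
  then have "x \<sigma> \<rho> \<noteq> 0" by simp
  from loc_nz[OF assms this] have "\<rho> \<in> CC" "\<forall>t. t\<notin>F \<longrightarrow> \<sigma> t = \<rho> t" by blast+
  then show "\<rho> \<in> RR F \<sigma>" unfolding RR_def by simp
qed

lemma finite_RR': "loc F x \<Longrightarrow> finite (RR F \<sigma>)"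
  by (rule finite_RR[OF loc_fin loc_sites])

lemma mult_RR: assumes "loc F x" shows "op_mult x y \<sigma> \<tau> = (\<Sum>\<rho>\<in>RR F \<sigma>. x \<sigma> \<rho> * y \<rho> \<tau>)"
  by (rule mult_A[OF finite_RR'[OF assms] nz_RR[OF assms]])

lemma mix_CC: "\<sigma> \<in> CC \<Longrightarrow> \<tau> \<in> CC \<Longrightarrow> (\<lambda>t. if P t then \<sigma> t else \<tau> t) \<in> CC"
  by (auto simp: cfgs_def)

lemma upd_CC: "\<sigma> \<in> CC \<Longrightarrow> s \<in> sites D \<Longrightarrow> j < p s \<Longrightarrow> \<sigma>(s:=j) \<in> CC"
  by (auto simp: cfgs_def)

lemma loc_mono: assumes "loc F x" "F \<subseteq> G" "finite G" "G \<subseteq> sites D" shows "loc G x"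
proof (rule locI)
  show "finite G" "G \<subseteq> sites D" by fact+
  fix \<sigma> \<tau> assume "x \<sigma> \<tau> \<noteq> 0" then show "\<sigma> \<in> CC \<and> \<tau> \<in> CC \<and> (\<forall>t. t\<notin>G \<longrightarrow> \<sigma> t = \<tau> t)"
    using loc_nz[OF assms(1)] assms(2) by blast
next
  fix \<sigma> \<tau> \<sigma>' \<tau>' assume c: "\<sigma> \<in> CC" "\<tau> \<in> CC" "\<sigma>' \<in> CC" "\<tau>' \<in> CC"
   and a1: "\<forall>t. t \<notin> G \<longrightarrow> \<sigma> t = \<tau> t" and a2: "\<forall>t. t \<notin> G \<longrightarrow> \<sigma>' t = \<tau>' t"
   and a3: "\<forall>t\<in>G. \<sigma> t = \<sigma>' t \<and> \<tau> t = \<tau>' t"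
  show "x \<sigma> \<tau> = x \<sigma>' \<tau>'"
  proof (cases "\<forall>t. t \<notin> F \<longrightarrow> \<sigma> t = \<tau> t")
    case True
    have b: "\<forall>t. t \<notin> F \<longrightarrow> \<sigma>' t = \<tau>' t"
    proof (intro allI impI)
      fix t assume t: "t \<notin> F"
      show "\<sigma>' t = \<tau>' t"
      proof (cases "t \<in> G")
        case True
        then have "\<sigma> t = \<sigma>' t" "\<tau> t = \<tau>' t" using a3 by auto
        moreover have "\<sigma> t = \<tau> t" using \<open>\<forall>t. t \<notin> F \<longrightarrow> \<sigma> t = \<tau> t\<close> t by blast
        ultimately show ?thesis by simp
      next
        case False then show ?thesis using a2 by blast
      qed
    qed
    have "\<forall>t\<in>F. \<sigma> t = \<sigma>' t \<and> \<tau> t = \<tau>' t" using a3 assms(2) by blast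
    then show ?thesis using loc_eq[OF assms(1) c True b] by blast
  next
    case False
    then obtain t where t: "t \<notin> F" "\<sigma> t \<noteq> \<tau> t" by blast
    then have "t \<in> G" using a1 by blast
    then have "\<sigma>' t \<noteq> \<tau>' t" using a3 t by simp
    then have "x \<sigma>' \<tau>' = 0" using loc_nz[OF assms(1), of \<sigma>' \<tau>'] t by blast
    moreover have "x \<sigma> \<tau> = 0" using loc_nz[OF assms(1), of \<sigma> \<tau>] t by blast
    ultimately show ?thesis by simp
  qed
qed

lemma loc_inter: assumes "loc F x" "loc G x" shows "loc (F \<inter> G) x"
proof (rule locI)
  show "finite (F \<inter> G)" "F \<inter> G \<subseteq> sites D" using assms loc_fin loc_sites by blast+
  fix \<sigma> \<tau> assume "x \<sigma> \<tau> \<noteq> 0" then show "\<sigma> \<in> CC \<and> \<tau> \<in> CC \<and> (\<forall>t. t\<notin>F \<inter> G \<longrightarrow> \<sigma> t = \<tau> t)"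
    using loc_nz[OF assms(1)] loc_nz[OF assms(2)] by blast
next
  fix \<sigma> \<tau> \<sigma>' \<tau>' assume c: "\<sigma> \<in> CC" "\<tau> \<in> CC" "\<sigma>' \<in> CC" "\<tau>' \<in> CC"
   and a1: "\<forall>t. t \<notin> F \<inter> G \<longrightarrow> \<sigma> t = \<tau> t" and a2: "\<forall>t. t \<notin> F \<inter> G \<longrightarrow> \<sigma>' t = \<tau>' t"
   and a3: "\<forall>t\<in>F \<inter> G. \<sigma> t = \<sigma>' t \<and> \<tau> t = \<tau>' t"
  define \<sigma>1 where "\<sigma>1 = (\<lambda>t. if t \<in> G then \<sigma> t else \<sigma>' t)"
  define \<tau>1 where "\<tau>1 = (\<lambda>t. if t \<in> G then \<tau> t else \<tau>' t)"
  have c1: "\<sigma>1 \<in> CC" "\<tau>1 \<in> CC" unfolding \<sigma>1_def \<tau>1_def using c by (auto intro: mix_CC)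
  have e1: "\<forall>t. t \<notin> G \<longrightarrow> \<sigma> t = \<tau> t" using a1 by blast
  have e2: "\<forall>t. t \<notin> G \<longrightarrow> \<sigma>1 t = \<tau>1 t" using a2 by (simp add: \<sigma>1_def \<tau>1_def)
  have e3: "\<forall>t\<in>G. \<sigma> t = \<sigma>1 t \<and> \<tau> t = \<tau>1 t" by (simp add: \<sigma>1_def \<tau>1_def)
  have "x \<sigma> \<tau> = x \<sigma>1 \<tau>1" by (rule loc_eq[OF assms(2) c(1,2) c1 e1 e2 e3])
  also have "\<dots> = x \<sigma>' \<tau>'"
  proof (rule loc_eq[OF assms(1) c1 c(3,4)])
    show "\<forall>t. t \<notin> F \<longrightarrow> \<sigma>1 t = \<tau>1 t" using a1 a2 by (simp add: \<sigma>1_def \<tau>1_def)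
    show "\<forall>t. t \<notin> F \<longrightarrow> \<sigma>' t = \<tau>' t" using a2 by blast
    show "\<forall>t\<in>F. \<sigma>1 t = \<sigma>' t \<and> \<tau>1 t = \<tau>' t" using a3 by (simp add: \<sigma>1_def \<tau>1_def)
  qed
  finally show "x \<sigma> \<tau> = x \<sigma>' \<tau>'" .
qed


lemma sum_nz: "(\<Sum>\<rho>\<in>A. f \<rho>) \<noteq> (0::complex) \<Longrightarrow> \<exists>\<rho>\<in>A. f \<rho> \<noteq> 0"
  by (meson sum.neutral)

lemma loc_add: assumes "loc F x" "loc F y" shows "loc F (op_add x y)"
proof (rule locI)
  show "finite F" "F \<subseteq> sites D" using loc_fin[OF assms(1)] loc_sites[OF assms(1)] .
  fix \<sigma> \<tau> assume "op_add x y \<sigma> \<tau> \<noteq> 0"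
  then have "x \<sigma> \<tau> \<noteq> 0 \<or> y \<sigma> \<tau> \<noteq> 0" unfolding op_add_def by auto
  then show "\<sigma> \<in> CC \<and> \<tau> \<in> CC \<and> (\<forall>t. t\<notin>F \<longrightarrow> \<sigma> t = \<tau> t)"
    using loc_nz[OF assms(1), of \<sigma> \<tau>] loc_nz[OF assms(2), of \<sigma> \<tau>] by blast
next
  fix \<sigma> \<tau> \<sigma>' \<tau>' assume c: "\<sigma> \<in> CC" "\<tau> \<in> CC" "\<sigma>' \<in> CC" "\<tau>' \<in> CC"
   and a: "\<forall>t. t \<notin> F \<longrightarrow> \<sigma> t = \<tau> t" "\<forall>t. t \<notin> F \<longrightarrow> \<sigma>' t = \<tau>' t"
   "\<forall>t\<in>F. \<sigma> t = \<sigma>' t \<and> \<tau> t = \<tau>' t"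
  show "op_add x y \<sigma> \<tau> = op_add x y \<sigma>' \<tau>'" unfolding op_add_def
    using loc_eq[OF assms(1) c a] loc_eq[OF assms(2) c a] by simp
qed

lemma loc_scale: assumes "loc F x" shows "loc F (op_scale c x)"
proof (rule locI)
  show "finite F" "F \<subseteq> sites D" using loc_fin[OF assms(1)] loc_sites[OF assms(1)] .
  fix \<sigma> \<tau> assume "op_scale c x \<sigma> \<tau> \<noteq> 0"
  then have "x \<sigma> \<tau> \<noteq> 0" unfolding op_scale_def by auto
  then show "\<sigma> \<in> CC \<and> \<tau> \<in> CC \<and> (\<forall>t. t\<notin>F \<longrightarrow> \<sigma> t = \<tau> t)"
    using loc_nz[OF assms(1), of \<sigma> \<tau>] by blast
next
  fix \<sigma> \<tau> \<sigma>' \<tau>' assume c: "\<sigma> \<in> CC" "\<tau> \<in> CC" "\<sigma>' \<in> CC" "\<tau>' \<in> CC"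
   and a: "\<forall>t. t \<notin> F \<longrightarrow> \<sigma> t = \<tau> t" "\<forall>t. t \<notin> F \<longrightarrow> \<sigma>' t = \<tau>' t"
   "\<forall>t\<in>F. \<sigma> t = \<sigma>' t \<and> \<tau> t = \<tau>' t"
  show "op_scale c x \<sigma> \<tau> = op_scale c x \<sigma>' \<tau>'" unfolding op_scale_def
    using loc_eq[OF assms(1) c a] by simp
qed

lemma loc_adj: assumes "loc F x" shows "loc F (op_adj x)"
proof (rule locI)
  show "finite F" "F \<subseteq> sites D" using loc_fin[OF assms(1)] loc_sites[OF assms(1)] .
  fix \<sigma> \<tau> assume "op_adj x \<sigma> \<tau> \<noteq> 0"
  then have "x \<tau> \<sigma> \<noteq> 0" unfolding op_adj_def by auto
  from loc_nz[OF assms(1) this]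
  show "\<sigma> \<in> CC \<and> \<tau> \<in> CC \<and> (\<forall>t. t\<notin>F \<longrightarrow> \<sigma> t = \<tau> t)" by simp
next
  fix \<sigma> \<tau> \<sigma>' \<tau>' assume c: "\<sigma> \<in> CC" "\<tau> \<in> CC" "\<sigma>' \<in> CC" "\<tau>' \<in> CC"
   and a: "\<forall>t. t \<notin> F \<longrightarrow> \<sigma> t = \<tau> t" "\<forall>t. t \<notin> F \<longrightarrow> \<sigma>' t = \<tau>' t"
   "\<forall>t\<in>F. \<sigma> t = \<sigma>' t \<and> \<tau> t = \<tau>' t"
  have a1: "\<forall>t. t \<notin> F \<longrightarrow> \<tau> t = \<sigma> t" "\<forall>t. t \<notin> F \<longrightarrow> \<tau>' t = \<sigma>' t"
    "\<forall>t\<in>F. \<tau> t = \<tau>' t \<and> \<sigma> t = \<sigma>' t" using a by simp_all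
  show "op_adj x \<sigma> \<tau> = op_adj x \<sigma>' \<tau>'" unfolding op_adj_def
    using loc_eq[OF assms(1) c(2,1,4,3) a1] by simp
qed

lemma loc_zero: assumes "finite F" "F \<subseteq> sites D" shows "loc F op_zero"
  by (rule locI[OF assms]) (simp_all add: op_zero_def)

lemma loc_one: "loc {} (op_one D p)"
proof (rule locI)
  fix \<sigma> \<tau> assume "op_one D p \<sigma> \<tau> \<noteq> 0"
  then show "\<sigma> \<in> CC \<and> \<tau> \<in> CC \<and> (\<forall>t. t\<notin>{} \<longrightarrow> \<sigma> t = \<tau> t)"
    unfolding op_one_def by (simp split: if_splits)
next
  fix \<sigma> \<tau> \<sigma>' \<tau>' assume c: "\<sigma> \<in> CC" "\<tau> \<in> CC" "\<sigma>' \<in> CC" "\<tau>' \<in> CC"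
   and a: "\<forall>t. t \<notin> {} \<longrightarrow> \<sigma> t = \<tau> t" "\<forall>t. t \<notin> {} \<longrightarrow> \<sigma>' t = \<tau>' t"
  have "\<sigma> = \<tau>" "\<sigma>' = \<tau>'" using a by auto
  then show "op_one D p \<sigma> \<tau> = op_one D p \<sigma>' \<tau>'" unfolding op_one_def using c by simp
qed simp_all

lemma loc_mult: assumes x: "loc F x" and y: "loc G y" shows "loc (F \<union> G) (op_mult x y)"
proof -
  let ?H = "F \<union> G"
  have fin: "finite ?H" "?H \<subseteq> sites D" using loc_fin[OF x] loc_fin[OF y] loc_sites[OF x] loc_sites[OF y] by auto
  have xH: "loc ?H x" by (rule loc_mono[OF x _ fin]) simp
  have yH: "loc ?H y" by (rule loc_mono[OF y _ fin]) simp
  show ?thesis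
  proof (rule locI[OF fin])
    fix \<sigma> \<tau> assume "op_mult x y \<sigma> \<tau> \<noteq> 0"
    then have "(\<Sum>\<rho>\<in>RR F \<sigma>. x \<sigma> \<rho> * y \<rho> \<tau>) \<noteq> 0" using mult_RR[OF x] by simp
    then obtain \<rho> where "x \<sigma> \<rho> * y \<rho> \<tau> \<noteq> 0" using sum_nz by blast
    then have "x \<sigma> \<rho> \<noteq> 0" "y \<rho> \<tau> \<noteq> 0" by auto
    from loc_nz[OF x this(1)] loc_nz[OF y this(2)]
    show "\<sigma> \<in> CC \<and> \<tau> \<in> CC \<and> (\<forall>t. t\<notin>?H \<longrightarrow> \<sigma> t = \<tau> t)" by auto
  next
    fix \<sigma> \<tau> \<sigma>' \<tau>' assume c: "\<sigma> \<in> CC" "\<tau> \<in> CC" "\<sigma>' \<in> CC" "\<tau>' \<in> CC"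
     and a1: "\<forall>t. t \<notin> ?H \<longrightarrow> \<sigma> t = \<tau> t" and a2: "\<forall>t. t \<notin> ?H \<longrightarrow> \<sigma>' t = \<tau>' t"
     and a3: "\<forall>t\<in>?H. \<sigma> t = \<sigma>' t \<and> \<tau> t = \<tau>' t"
    define h where "h = (\<lambda>\<rho>::cfg. (\<lambda>t. if t \<in> ?H then \<rho> t else \<sigma>' t))"
    define k where "k = (\<lambda>\<rho>::cfg. (\<lambda>t. if t \<in> ?H then \<rho> t else \<sigma> t))"
    have "(\<Sum>\<rho>\<in>RR ?H \<sigma>. x \<sigma> \<rho> * y \<rho> \<tau>) = (\<Sum>\<rho>\<in>RR ?H \<sigma>'. x \<sigma>' \<rho> * y \<rho> \<tau>')"
    proof (rule sum.reindex_bij_witness[of _ k h])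
      fix \<rho> assume r: "\<rho> \<in> RR ?H \<sigma>"
      then have r1: "\<rho> \<in> CC" "\<forall>t. t \<notin> ?H \<longrightarrow> \<rho> t = \<sigma> t" unfolding RR_def by auto
      show "k (h \<rho>) = \<rho>" unfolding h_def k_def using r1(2) by (auto simp: fun_eq_iff)
      have hc: "h \<rho> \<in> CC" unfolding h_def by (rule mix_CC[OF r1(1) c(3)])
      show "h \<rho> \<in> RR ?H \<sigma>'" unfolding RR_def using hc by (simp add: h_def)
      have e1: "x \<sigma> \<rho> = x \<sigma>' (h \<rho>)"
        by (rule loc_eq[OF xH c(1) r1(1) c(3) hc]) (use r1(2) a3 in \<open>auto simp: h_def\<close>)
      have e2: "y \<rho> \<tau> = y (h \<rho>) \<tau>'"
        by (rule loc_eq[OF yH r1(1) c(2) hc c(4)]) (use r1(2) a1 a2 a3 in \<open>auto simp: h_def\<close>)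
      show "x \<sigma>' (h \<rho>) * y (h \<rho>) \<tau>' = x \<sigma> \<rho> * y \<rho> \<tau>" using e1 e2 by simp
    next
      fix \<rho> assume r: "\<rho> \<in> RR ?H \<sigma>'"
      then have r1: "\<rho> \<in> CC" "\<forall>t. t \<notin> ?H \<longrightarrow> \<rho> t = \<sigma>' t" unfolding RR_def by auto
      show "h (k \<rho>) = \<rho>" unfolding h_def k_def using r1(2) by (auto simp: fun_eq_iff)
      have kc: "k \<rho> \<in> CC" unfolding k_def by (rule mix_CC[OF r1(1) c(1)])
      show "k \<rho> \<in> RR ?H \<sigma>" unfolding RR_def using kc by (simp add: k_def)
    qed
    then show "op_mult x y \<sigma> \<tau> = op_mult x y \<sigma>' \<tau>'" using mult_RR[OF xH] by simp
  qed
qed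


definition osum :: "'i list \<Rightarrow> ('i \<Rightarrow> op) \<Rightarrow> op" where
  "osum xs f = (\<lambda>\<sigma> \<tau>. sum_list (map (\<lambda>i. f i \<sigma> \<tau>) xs))"

lemma osum_Nil: "osum [] f = op_zero"
  by (simp add: osum_def op_zero_def)

lemma osum_Cons: "osum (i # xs) f = op_add (f i) (osum xs f)"
  by (simp add: osum_def op_add_def)

lemma loc_osum: assumes "finite F" "F \<subseteq> sites D" shows "(\<forall>i\<in>set xs. loc F (f i)) \<Longrightarrow> loc F (osum xs f)"
proof (induction xs)
  case Nil then show ?case using loc_zero[OF assms] by (simp add: osum_Nil)
next
  case (Cons a xs) then show ?case by (simp add: osum_Cons loc_add)
qed

lemma osum_cong: assumes "\<And>i. i \<in> set xs \<Longrightarrow> f i = g i" shows "osum xs f = osum xs g"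
proof (intro ext)
  fix \<sigma> \<tau>
  have "map (\<lambda>i. f i \<sigma> \<tau>) xs = map (\<lambda>i. g i \<sigma> \<tau>) xs" by (rule map_cong) (simp_all add: assms)
  then show "osum xs f \<sigma> \<tau> = osum xs g \<sigma> \<tau>" unfolding osum_def by (rule arg_cong)
qed

lemma osum_map: "osum (map h xs) f = osum xs (\<lambda>i. f (h i))"
  unfolding osum_def by (simp add: comp_def)

lemma osum_concat: "osum (concat (map g ys)) f = osum ys (\<lambda>j. osum (g j) f)"
  unfolding osum_def by (intro ext) (induction ys, simp_all)

lemma sum_list_swap: "sum_list (map (\<lambda>i. sum_list (map (\<lambda>j. h i j) ys)) xs) =
   sum_list (map (\<lambda>j. sum_list (map (\<lambda>i. h i j) xs)) ys)" for h :: "_ \<Rightarrow> _ \<Rightarrow> complex"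
  by (induction xs) (simp_all add: sum_list_addf)

lemma osum_swap: "osum xs (\<lambda>i. osum ys (\<lambda>j. f i j)) = osum ys (\<lambda>j. osum xs (\<lambda>i. f i j))"
  unfolding osum_def by (intro ext) (rule sum_list_swap)

lemma op_sum_prods_osum: "op_sum_prods ab = osum ab (\<lambda>(a, b). op_mult a b)"
proof (induction ab)
  case Nil then show ?case by (simp add: op_sum_prods_def osum_Nil)
next
  case (Cons a ab) then show ?case
    by (cases a) (simp add: op_sum_prods_def osum_Cons)
qed

lemma sum_sum_list_right: "(\<Sum>\<rho>\<in>A. c \<rho> * sum_list (map (\<lambda>i. g i \<rho>) xs)) =
    sum_list (map (\<lambda>i. \<Sum>\<rho>\<in>A. c \<rho> * g i \<rho>) xs)" for c :: "_ \<Rightarrow> complex"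
  by (induction xs) (simp_all add: distrib_left sum.distrib)

lemma sum_sum_list_left: "(\<Sum>\<rho>\<in>A. sum_list (map (\<lambda>i. g i \<rho>) xs) * c \<rho>) =
    sum_list (map (\<lambda>i. \<Sum>\<rho>\<in>A. g i \<rho> * c \<rho>) xs)" for c :: "_ \<Rightarrow> complex"
  by (induction xs) (simp_all add: distrib_right sum.distrib)

lemma mult_osum_right: assumes "loc F x"
  shows "op_mult x (osum xs f) = osum xs (\<lambda>i. op_mult x (f i))"
proof (intro ext)
  fix \<sigma> \<tau>
  have "op_mult x (osum xs f) \<sigma> \<tau> = (\<Sum>\<rho>\<in>RR F \<sigma>. x \<sigma> \<rho> * sum_list (map (\<lambda>i. f i \<rho> \<tau>) xs))"
    by (simp add: mult_RR[OF assms] osum_def)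
  also have "\<dots> = sum_list (map (\<lambda>i. \<Sum>\<rho>\<in>RR F \<sigma>. x \<sigma> \<rho> * f i \<rho> \<tau>) xs)"
    by (rule sum_sum_list_right)
  also have "\<dots> = osum xs (\<lambda>i. op_mult x (f i)) \<sigma> \<tau>"
    by (simp add: mult_RR[OF assms] osum_def)
  finally show "op_mult x (osum xs f) \<sigma> \<tau> = osum xs (\<lambda>i. op_mult x (f i)) \<sigma> \<tau>" .
qed

lemma mult_osum_left: assumes "finite F" "F \<subseteq> sites D" "\<forall>i\<in>set xs. loc F (f i)"
  shows "op_mult (osum xs f) z = osum xs (\<lambda>i. op_mult (f i) z)"
proof (intro ext)
  fix \<sigma> \<tau>
  have L: "loc F (osum xs f)" by (rule loc_osum[OF assms(1,2) assms(3)])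
  have "op_mult (osum xs f) z \<sigma> \<tau> = (\<Sum>\<rho>\<in>RR F \<sigma>. sum_list (map (\<lambda>i. f i \<sigma> \<rho>) xs) * z \<rho> \<tau>)"
    unfolding mult_RR[OF L] by (simp add: osum_def)
  also have "\<dots> = sum_list (map (\<lambda>i. \<Sum>\<rho>\<in>RR F \<sigma>. f i \<sigma> \<rho> * z \<rho> \<tau>) xs)"
    by (rule sum_sum_list_left)
  also have "\<dots> = sum_list (map (\<lambda>i. op_mult (f i) z \<sigma> \<tau>) xs)"
  proof (rule arg_cong[where f=sum_list], rule map_cong[OF refl])
    fix i assume "i \<in> set xs"
    then show "(\<Sum>\<rho>\<in>RR F \<sigma>. f i \<sigma> \<rho> * z \<rho> \<tau>) = op_mult (f i) z \<sigma> \<tau>"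
      using mult_RR assms(3) by metis
  qed
  also have "\<dots> = osum xs (\<lambda>i. op_mult (f i) z) \<sigma> \<tau>" by (simp add: osum_def)
  finally show "op_mult (osum xs f) z \<sigma> \<tau> = osum xs (\<lambda>i. op_mult (f i) z) \<sigma> \<tau>" .
qed

lemma mult_scale_left: assumes "loc F x" shows "op_mult (op_scale c x) y = op_scale c (op_mult x y)"
  unfolding mult_RR[OF loc_scale[OF assms]] mult_RR[OF assms]
  by (intro ext) (simp add: op_scale_def sum_distrib_left mult.assoc)

lemma mult_scale_right: assumes "loc F x" shows "op_mult x (op_scale c y) = op_scale c (op_mult x y)"
  unfolding mult_RR[OF assms]
  by (intro ext) (simp add: op_scale_def sum_distrib_left mult.left_commute)

lemma mult_assoc: assumes x: "loc F x" and y: "loc G y" and z: "loc H z"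
  shows "op_mult (op_mult x y) z = op_mult x (op_mult y z)"
proof (intro ext)
  fix \<sigma> \<tau>
  let ?A = "RR (F \<union> G) \<sigma>" and ?B = "RR F \<sigma>"
  have xy: "loc (F \<union> G) (op_mult x y)" by (rule loc_mult[OF x y])
  have finA: "finite ?A" by (rule finite_RR'[OF xy])
  have inner: "op_mult y z \<rho>' \<tau> = (\<Sum>\<rho>\<in>?A. y \<rho>' \<rho> * z \<rho> \<tau>)" if r: "\<rho>' \<in> ?B" for \<rho>'
  proof (rule mult_A[OF finA])
    show "{\<rho>. y \<rho>' \<rho> \<noteq> 0} \<subseteq> ?A"
    proof
      fix \<rho> assume "\<rho> \<in> {\<rho>. y \<rho>' \<rho> \<noteq> 0}"
      then have "y \<rho>' \<rho> \<noteq> 0" by simp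
      from loc_nz[OF y this] have "\<rho> \<in> CC" "\<forall>t. t \<notin> G \<longrightarrow> \<rho>' t = \<rho> t" by blast+
      moreover have "\<forall>t. t \<notin> F \<longrightarrow> \<rho>' t = \<sigma> t" using r unfolding RR_def by blast
      ultimately show "\<rho> \<in> ?A" unfolding RR_def by auto
    qed
  qed
  have "op_mult (op_mult x y) z \<sigma> \<tau> = (\<Sum>\<rho>\<in>?A. (\<Sum>\<rho>'\<in>?B. x \<sigma> \<rho>' * y \<rho>' \<rho>) * z \<rho> \<tau>)"
    by (simp add: mult_RR[OF xy] mult_RR[OF x])
  also have "\<dots> = (\<Sum>\<rho>\<in>?A. \<Sum>\<rho>'\<in>?B. x \<sigma> \<rho>' * (y \<rho>' \<rho> * z \<rho> \<tau>))"
    by (simp add: sum_distrib_right mult.assoc)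
  also have "\<dots> = (\<Sum>\<rho>'\<in>?B. \<Sum>\<rho>\<in>?A. x \<sigma> \<rho>' * (y \<rho>' \<rho> * z \<rho> \<tau>))"
    by (rule sum.swap)
  also have "\<dots> = (\<Sum>\<rho>'\<in>?B. x \<sigma> \<rho>' * (\<Sum>\<rho>\<in>?A. y \<rho>' \<rho> * z \<rho> \<tau>))"
    by (simp add: sum_distrib_left)
  also have "\<dots> = (\<Sum>\<rho>'\<in>?B. x \<sigma> \<rho>' * op_mult y z \<rho>' \<tau>)"
    by (rule sum.cong[OF refl]) (simp add: inner)
  also have "\<dots> = op_mult x (op_mult y z) \<sigma> \<tau>" by (simp add: mult_RR[OF x])
  finally show "op_mult (op_mult x y) z \<sigma> \<tau> = op_mult x (op_mult y z) \<sigma> \<tau>" .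
qed

lemma mult_one_right: assumes "loc F y" shows "op_mult y (op_one D p) = y"
proof (intro ext)
  fix \<sigma> \<tau>
  have "op_mult y (op_one D p) \<sigma> \<tau> = (\<Sum>\<rho>\<in>RR F \<sigma>. if \<rho> = \<tau> then (if \<tau> \<in> CC then y \<sigma> \<tau> else 0) else 0)"
    unfolding mult_RR[OF assms] by (rule sum.cong[OF refl]) (simp add: op_one_def)
  also have "\<dots> = (if \<tau> \<in> RR F \<sigma> then (if \<tau> \<in> CC then y \<sigma> \<tau> else 0) else 0)"
    by (rule sum.delta[OF finite_RR'[OF assms]])
  also have "\<dots> = y \<sigma> \<tau>"
  proof (cases "\<tau> \<in> RR F \<sigma>")
    case True then have "\<tau> \<in> CC" unfolding RR_def by simp
    then show ?thesis using True by simp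
  next
    case False then have "y \<sigma> \<tau> = 0" using nz_RR[OF assms, of \<sigma>] by blast
    then show ?thesis by simp
  qed
  finally show "op_mult y (op_one D p) \<sigma> \<tau> = y \<sigma> \<tau>" .
qed


definition eunit :: "site \<Rightarrow> nat \<Rightarrow> nat \<Rightarrow> op" where
  "eunit s i j = (\<lambda>\<sigma> \<tau>. if \<sigma> \<in> cfgs D p \<and> \<tau> \<in> cfgs D p \<and> \<sigma> s = i \<and> \<tau> s = j \<and> (\<forall>t. t \<noteq> s \<longrightarrow> \<sigma> t = \<tau> t) then 1 else 0)"

lemma loc_unit: assumes "s \<in> sites D" shows "loc {s} (eunit s i j)"
proof (rule locI)
  show "finite {s}" "{s} \<subseteq> sites D" using assms by auto
  fix \<sigma> \<tau> assume "eunit s i j \<sigma> \<tau> \<noteq> 0"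
  then show "\<sigma> \<in> CC \<and> \<tau> \<in> CC \<and> (\<forall>t. t\<notin>{s} \<longrightarrow> \<sigma> t = \<tau> t)"
    unfolding eunit_def by (simp split: if_splits)
next
  fix \<sigma> \<tau> \<sigma>' \<tau>' assume c: "\<sigma> \<in> CC" "\<tau> \<in> CC" "\<sigma>' \<in> CC" "\<tau>' \<in> CC"
   and a: "\<forall>t. t \<notin> {s} \<longrightarrow> \<sigma> t = \<tau> t" "\<forall>t. t \<notin> {s} \<longrightarrow> \<sigma>' t = \<tau>' t"
   "\<forall>t\<in>{s}. \<sigma> t = \<sigma>' t \<and> \<tau> t = \<tau>' t"
  then show "eunit s i j \<sigma> \<tau> = eunit s i j \<sigma>' \<tau>'" unfolding eunit_def by simp
qed

lemma eunit_alt: assumes "s \<in> sites D" "i < p s"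
  shows "eunit s i j \<rho> \<tau> = (if \<rho> = \<tau>(s:=i) \<and> \<tau> \<in> CC \<and> \<tau> s = j then 1 else 0)"
proof -
  have "(\<rho> \<in> CC \<and> \<tau> \<in> CC \<and> \<rho> s = i \<and> \<tau> s = j \<and> (\<forall>t. t \<noteq> s \<longrightarrow> \<rho> t = \<tau> t)) \<longleftrightarrow>
        (\<rho> = \<tau>(s:=i) \<and> \<tau> \<in> CC \<and> \<tau> s = j)"
  proof
    assume h: "\<rho> \<in> CC \<and> \<tau> \<in> CC \<and> \<rho> s = i \<and> \<tau> s = j \<and> (\<forall>t. t \<noteq> s \<longrightarrow> \<rho> t = \<tau> t)"
    then have "\<rho> = \<tau>(s:=i)" by (auto simp: fun_eq_iff)
    then show "\<rho> = \<tau>(s:=i) \<and> \<tau> \<in> CC \<and> \<tau> s = j" using h by simp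
  next
    assume h: "\<rho> = \<tau>(s:=i) \<and> \<tau> \<in> CC \<and> \<tau> s = j"
    then have "\<rho> \<in> CC" using upd_CC assms by blast
    then show "\<rho> \<in> CC \<and> \<tau> \<in> CC \<and> \<rho> s = i \<and> \<tau> s = j \<and> (\<forall>t. t \<noteq> s \<longrightarrow> \<rho> t = \<tau> t)"
      using h by simp
  qed
  then show ?thesis unfolding eunit_def by simp
qed

lemma unit_left: assumes "s \<in> sites D" "j < p s"
  shows "op_mult (eunit s i j) w \<sigma> \<tau> = (if \<sigma> \<in> CC \<and> \<sigma> s = i then w (\<sigma>(s:=j)) \<tau> else 0)"
proof -
  have nz: "{\<rho>. eunit s i j \<sigma> \<rho> \<noteq> 0} \<subseteq> {\<sigma>(s:=j)}"
  proof
    fix \<rho> assume "\<rho> \<in> {\<rho>. eunit s i j \<sigma> \<rho> \<noteq> 0}"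
    then have h: "\<rho> s = j" "\<forall>t. t \<noteq> s \<longrightarrow> \<sigma> t = \<rho> t" unfolding eunit_def by (simp_all split: if_splits)
    then have "\<rho> = \<sigma>(s:=j)" by (auto simp: fun_eq_iff)
    then show "\<rho> \<in> {\<sigma>(s:=j)}" by simp
  qed
  have e: "eunit s i j \<sigma> (\<sigma>(s:=j)) = (if \<sigma> \<in> CC \<and> \<sigma> s = i then 1 else 0)"
    using upd_CC[OF _ assms] unfolding eunit_def by auto
  have f: "finite {\<sigma>(s:=j)}" by simp
  show ?thesis unfolding mult_A[where A="{\<sigma>(s:=j)}" and x="eunit s i j" and \<sigma>=\<sigma> and y=w and \<tau>=\<tau>, OF f nz]
    using e by simp
qed

lemma unit_right: assumes "s \<in> sites D" "i < p s" "loc F w"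
  shows "op_mult w (eunit s i j) \<sigma> \<tau> = (if \<tau> \<in> CC \<and> \<tau> s = j then w \<sigma> (\<tau>(s:=i)) else 0)"
proof -
  let ?a = "\<tau>(s:=i)"
  have "op_mult w (eunit s i j) \<sigma> \<tau> = (\<Sum>\<rho>\<in>RR F \<sigma>. if \<rho> = ?a then (if \<tau> \<in> CC \<and> \<tau> s = j then w \<sigma> ?a else 0) else 0)"
    unfolding mult_RR[OF assms(3)] by (rule sum.cong[OF refl]) (simp add: eunit_alt[OF assms(1,2)])
  also have "\<dots> = (if ?a \<in> RR F \<sigma> then (if \<tau> \<in> CC \<and> \<tau> s = j then w \<sigma> ?a else 0) else 0)"
    by (rule sum.delta[OF finite_RR'[OF assms(3)]])
  also have "\<dots> = (if \<tau> \<in> CC \<and> \<tau> s = j then w \<sigma> ?a else 0)"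
  proof (cases "?a \<in> RR F \<sigma>")
    case False then have "w \<sigma> ?a = 0" using nz_RR[OF assms(3), of \<sigma>] by blast
    then show ?thesis by simp
  qed simp
  finally show ?thesis .
qed

lemma loc_shift: assumes "loc G w" "s \<notin> G" "s \<in> sites D" "k < p s" "a \<in> CC" "b \<in> CC" "a s = b s"
  shows "w (a(s:=k)) (b(s:=k)) = w a b"
proof (cases "\<forall>t. t \<notin> G \<longrightarrow> a t = b t")
  case True
  have c: "a(s:=k) \<in> CC" "b(s:=k) \<in> CC" using upd_CC assms by blast+
  show ?thesis
    by (rule loc_eq[OF assms(1) c assms(5,6)]) (use True assms(2) in auto)
next
  case False
  then obtain t where t: "t \<notin> G" "a t \<noteq> b t" by blast
  then have "t \<noteq> s" using assms(7) by auto
  then have "(a(s:=k)) t \<noteq> (b(s:=k)) t" using t by simp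
  then have "w (a(s:=k)) (b(s:=k)) = 0" using loc_nz[OF assms(1), of "a(s:=k)" "b(s:=k)"] t(1) by blast
  moreover have "w a b = 0" using loc_nz[OF assms(1), of a b] t by blast
  ultimately show ?thesis by simp
qed

lemma unit_comm: assumes u: "loc F u" and s: "s \<notin> F" "s \<in> sites D" and ij: "i < p s" "j < p s"
  shows "op_mult (eunit s i j) u = op_mult u (eunit s i j)"
proof (intro ext)
  fix \<sigma> \<tau>
  have L: "op_mult (eunit s i j) u \<sigma> \<tau> = (if \<sigma> \<in> CC \<and> \<sigma> s = i then u (\<sigma>(s:=j)) \<tau> else 0)"
    by (rule unit_left[OF s(2) ij(2)])
  have R: "op_mult u (eunit s i j) \<sigma> \<tau> = (if \<tau> \<in> CC \<and> \<tau> s = j then u \<sigma> (\<tau>(s:=i)) else 0)"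
    by (rule unit_right[OF s(2) ij(1) u])
  have z1: "u \<sigma>' \<tau>' = 0" if "\<sigma>' s \<noteq> \<tau>' s" for \<sigma>' \<tau>'
    using loc_nz[OF u, of \<sigma>' \<tau>'] that s(1) by blast
  have z2: "u \<sigma>' \<tau>' = 0" if "\<sigma>' \<notin> CC \<or> \<tau>' \<notin> CC" for \<sigma>' \<tau>'
    using loc_nz[OF u, of \<sigma>' \<tau>'] that by blast
  show "op_mult (eunit s i j) u \<sigma> \<tau> = op_mult u (eunit s i j) \<sigma> \<tau>"
  proof (cases "\<sigma> \<in> CC \<and> \<tau> \<in> CC")
    case False then show ?thesis unfolding L R using z2 by auto
  next
    case True
    then have c: "\<sigma> \<in> CC" "\<tau> \<in> CC" by auto
    show ?thesis
    proof (cases "\<sigma> s = i \<and> \<tau> s = j")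
      case True
      have a: "\<sigma>(s:=j) \<in> CC" using upd_CC[OF c(1) s(2) ij(2)] .
      have "u ((\<sigma>(s:=j))(s:=i)) (\<tau>(s:=i)) = u (\<sigma>(s:=j)) \<tau>"
        by (rule loc_shift[OF u s(1) s(2) ij(1) a c(2)]) (use True in simp)
      moreover have "(\<sigma>(s:=j))(s:=i) = \<sigma>" using True by auto
      ultimately show ?thesis unfolding L R using True c by simp
    next
      case False
      have "u (\<sigma>(s:=j)) \<tau> = 0" if "\<sigma> s = i" using False that z1[of "\<sigma>(s:=j)" \<tau>] by simp
      moreover have "u \<sigma> (\<tau>(s:=i)) = 0" if "\<tau> s = j" using False that z1[of \<sigma> "\<tau>(s:=i)"] by simp
      ultimately show ?thesis unfolding L R using False by auto
    qed
  qed
qed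

lemma unit_commutant: assumes w: "loc G w" and s: "s \<in> sites D"
  and cm: "\<And>i j. i < p s \<Longrightarrow> j < p s \<Longrightarrow> op_mult (eunit s i j) w = op_mult w (eunit s i j)"
  shows "loc (G - {s}) w"
proof -
  have rel: "(if \<sigma> s = i then w (\<sigma>(s:=k)) \<tau> else 0) = (if \<tau> s = k then w \<sigma> (\<tau>(s:=i)) else 0)"
    if "\<sigma> \<in> CC" "\<tau> \<in> CC" "i < p s" "k < p s" for \<sigma> \<tau> i k
  proof -
    have "op_mult (eunit s i k) w \<sigma> \<tau> = op_mult w (eunit s i k) \<sigma> \<tau>" using cm that(3,4) by simp
    then show ?thesis unfolding unit_left[OF s that(4)] unit_right[OF s that(3) w] using that(1,2) by simp
  qed
  show ?thesis
  proof (rule locI)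
    show "finite (G - {s})" "G - {s} \<subseteq> sites D" using loc_fin[OF w] loc_sites[OF w] by auto
    fix \<sigma> \<tau> assume nz: "w \<sigma> \<tau> \<noteq> 0"
    from loc_nz[OF w nz] have c: "\<sigma> \<in> CC" "\<tau> \<in> CC" and ag: "\<forall>t. t\<notin>G \<longrightarrow> \<sigma> t = \<tau> t" by auto
    have lt: "\<sigma> s < p s" using c(1) s unfolding cfgs_def by auto
    have "\<tau> s = \<sigma> s"
    proof (rule ccontr)
      assume "\<tau> s \<noteq> \<sigma> s"
      then have "w \<sigma> \<tau> = 0" using rel[OF c lt lt] by simp
      then show False using nz by simp
    qed
    then show "\<sigma> \<in> CC \<and> \<tau> \<in> CC \<and> (\<forall>t. t\<notin>G - {s} \<longrightarrow> \<sigma> t = \<tau> t)" using c ag by auto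
  next
    fix \<sigma> \<tau> \<sigma>' \<tau>' assume c: "\<sigma> \<in> CC" "\<tau> \<in> CC" "\<sigma>' \<in> CC" "\<tau>' \<in> CC"
     and a1: "\<forall>t. t \<notin> G - {s} \<longrightarrow> \<sigma> t = \<tau> t" and a2: "\<forall>t. t \<notin> G - {s} \<longrightarrow> \<sigma>' t = \<tau>' t"
     and a3: "\<forall>t\<in>G - {s}. \<sigma> t = \<sigma>' t \<and> \<tau> t = \<tau>' t"
    define a where "a = \<sigma> s"
    define b where "b = \<sigma>' s"
    have ta: "\<tau> s = a" using a1 a_def by simp
    have tb: "\<tau>' s = b" using a2 b_def by simp
    have alt: "a < p s" "b < p s" using c(1,3) s unfolding a_def b_def cfgs_def by auto
    have c2: "\<tau>(s:=b) \<in> CC" "\<sigma>(s:=b) \<in> CC" using upd_CC[OF c(2) s alt(2)] upd_CC[OF c(1) s alt(2)] by auto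
    have "(if \<sigma> s = a then w (\<sigma>(s:=b)) (\<tau>(s:=b)) else 0) = (if (\<tau>(s:=b)) s = b then w \<sigma> ((\<tau>(s:=b))(s:=a)) else 0)"
      by (rule rel[OF c(1) c2(1) alt(1) alt(2)])
    moreover have "(\<tau>(s:=b))(s:=a) = \<tau>" using ta by auto
    ultimately have e1: "w (\<sigma>(s:=b)) (\<tau>(s:=b)) = w \<sigma> \<tau>" using a_def by simp
    have e2: "w (\<sigma>(s:=b)) (\<tau>(s:=b)) = w \<sigma>' \<tau>'"
    proof (rule loc_eq[OF w c2(2) c2(1) c(3,4)])
      show "\<forall>t. t \<notin> G \<longrightarrow> (\<sigma>(s:=b)) t = (\<tau>(s:=b)) t" using a1 by simp
      show "\<forall>t. t \<notin> G \<longrightarrow> \<sigma>' t = \<tau>' t" using a2 by simp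
      show "\<forall>t\<in>G. (\<sigma>(s:=b)) t = \<sigma>' t \<and> (\<tau>(s:=b)) t = \<tau>' t" using a3 b_def tb by simp
    qed
    show "w \<sigma> \<tau> = w \<sigma>' \<tau>'" using e1 e2 by simp
  qed
qed

lemma remove_sites: assumes "finite X"
  shows "loc G w \<Longrightarrow> X \<subseteq> sites D \<Longrightarrow>
    (\<And>t i j. t \<in> X \<Longrightarrow> i < p t \<Longrightarrow> j < p t \<Longrightarrow> op_mult (eunit t i j) w = op_mult w (eunit t i j)) \<Longrightarrow>
    loc (G - X) w"
  using assms
proof (induction X rule: finite_induct)
  case empty then show ?case by simp
next
  case (insert t X)
  have "loc (G - X) w" using insert by blast
  then have "loc (G - X - {t}) w"
    by (rule unit_commutant) (use insert in auto)
  moreover have "G - X - {t} = G - insert t X" by auto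
  ultimately show ?case by simp
qed

definition slice :: "site \<Rightarrow> nat \<Rightarrow> nat \<Rightarrow> op \<Rightarrow> op" where
  "slice s i j y = (\<lambda>\<sigma> \<tau>. if \<sigma> \<in> cfgs D p \<and> \<tau> \<in> cfgs D p \<and> \<sigma> s = \<tau> s then y (\<sigma>(s:=i)) (\<tau>(s:=j)) else 0)"

lemma loc_slice: assumes y: "loc G y" and s: "s \<in> G" and ij: "i < p s" "j < p s"
  shows "loc (G - {s}) (slice s i j y)"
proof -
  have ss: "s \<in> sites D" using s loc_sites[OF y] by auto
  show ?thesis
  proof (rule locI)
    show "finite (G - {s})" "G - {s} \<subseteq> sites D" using loc_fin[OF y] loc_sites[OF y] by auto
    fix \<sigma> \<tau> assume nz: "slice s i j y \<sigma> \<tau> \<noteq> 0"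
    then have h: "\<sigma> \<in> CC" "\<tau> \<in> CC" "\<sigma> s = \<tau> s" "y (\<sigma>(s:=i)) (\<tau>(s:=j)) \<noteq> 0"
      unfolding slice_def by (simp_all split: if_splits)
    from loc_nz[OF y h(4)] have "\<forall>t. t \<notin> G \<longrightarrow> (\<sigma>(s:=i)) t = (\<tau>(s:=j)) t" by blast
    then have "\<forall>t. t \<notin> G - {s} \<longrightarrow> \<sigma> t = \<tau> t" using h(3) s by (metis DiffI fun_upd_other singletonD)
    then show "\<sigma> \<in> CC \<and> \<tau> \<in> CC \<and> (\<forall>t. t\<notin>G - {s} \<longrightarrow> \<sigma> t = \<tau> t)" using h by simp
  next
    fix \<sigma> \<tau> \<sigma>' \<tau>' assume c: "\<sigma> \<in> CC" "\<tau> \<in> CC" "\<sigma>' \<in> CC" "\<tau>' \<in> CC"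
     and a1: "\<forall>t. t \<notin> G - {s} \<longrightarrow> \<sigma> t = \<tau> t" and a2: "\<forall>t. t \<notin> G - {s} \<longrightarrow> \<sigma>' t = \<tau>' t"
     and a3: "\<forall>t\<in>G - {s}. \<sigma> t = \<sigma>' t \<and> \<tau> t = \<tau>' t"
    have e: "\<sigma> s = \<tau> s" "\<sigma>' s = \<tau>' s" using a1 a2 by auto
    have c2: "\<sigma>(s:=i) \<in> CC" "\<tau>(s:=j) \<in> CC" "\<sigma>'(s:=i) \<in> CC" "\<tau>'(s:=j) \<in> CC"
      using upd_CC ss ij c by blast+
    have "y (\<sigma>(s:=i)) (\<tau>(s:=j)) = y (\<sigma>'(s:=i)) (\<tau>'(s:=j))"
    proof (rule loc_eq[OF y c2])
      show "\<forall>t. t \<notin> G \<longrightarrow> (\<sigma>(s:=i)) t = (\<tau>(s:=j)) t" using a1 s by auto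
      show "\<forall>t. t \<notin> G \<longrightarrow> (\<sigma>'(s:=i)) t = (\<tau>'(s:=j)) t" using a2 s by auto
      show "\<forall>t\<in>G. (\<sigma>(s:=i)) t = (\<sigma>'(s:=i)) t \<and> (\<tau>(s:=j)) t = (\<tau>'(s:=j)) t" using a3 by auto
    qed
    then show "slice s i j y \<sigma> \<tau> = slice s i j y \<sigma>' \<tau>'" unfolding slice_def using c e by simp
  qed
qed

definition pairs :: "nat \<Rightarrow> (nat \<times> nat) list" where
  "pairs P = List.product [0..<P] [0..<P]"

lemma sum_list_pairs: "sum_list (map f (pairs P)) = (\<Sum>ij\<in>{..<P} \<times> {..<P}. f ij)" for f :: "_ \<Rightarrow> complex"
proof -
  have "distinct (pairs P)" unfolding pairs_def by (simp add: distinct_product)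
  then have "sum_list (map f (pairs P)) = sum f (set (pairs P))" by (rule sum_list_distinct_conv_sum_set)
  moreover have "set (pairs P) = {..<P} \<times> {..<P}" unfolding pairs_def by auto
  ultimately show ?thesis by simp
qed

lemma set_pairs: "set (pairs P) = {..<P} \<times> {..<P}" unfolding pairs_def by auto

lemma unit_dec: assumes y: "loc G y" and s: "s \<in> G"
  shows "y = osum (pairs (p s)) (\<lambda>(i, j). op_mult (eunit s i j) (slice s i j y))"
proof (intro ext)
  fix \<sigma> \<tau>
  have ss: "s \<in> sites D" using s loc_sites[OF y] by auto
  have tm: "(case ij of (i, j) \<Rightarrow> op_mult (eunit s i j) (slice s i j y)) \<sigma> \<tau> =
       (if ij = (\<sigma> s, \<tau> s) then (if \<sigma> \<in> CC \<and> \<tau> \<in> CC then y \<sigma> \<tau> else 0) else 0)"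
    if "ij \<in> {..<p s} \<times> {..<p s}" for ij
  proof (cases ij)
    case (Pair i j)
    then have ij: "i < p s" "j < p s" using that by auto
    have "op_mult (eunit s i j) (slice s i j y) \<sigma> \<tau> = (if \<sigma> \<in> CC \<and> \<sigma> s = i then slice s i j y (\<sigma>(s:=j)) \<tau> else 0)"
      by (rule unit_left[OF ss ij(2)])
    also have "\<dots> = (if (i, j) = (\<sigma> s, \<tau> s) then (if \<sigma> \<in> CC \<and> \<tau> \<in> CC then y \<sigma> \<tau> else 0) else 0)"
    proof (cases "\<sigma> \<in> CC \<and> \<sigma> s = i")
      case True
      have u: "\<sigma>(s:=j) \<in> CC" using upd_CC[OF _ ss ij(2)] True by blast
      have "slice s i j y (\<sigma>(s:=j)) \<tau> = (if \<tau> \<in> CC \<and> j = \<tau> s then y \<sigma> \<tau> else 0)"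
      proof (cases "\<tau> \<in> CC \<and> j = \<tau> s")
        case True2: True
        have "(\<sigma>(s:=j))(s:=i) = \<sigma>" "\<tau>(s:=j) = \<tau>" using True True2 by auto
        then show ?thesis unfolding slice_def using u True2 by simp
      next
        case False then show ?thesis unfolding slice_def by auto
      qed
      then show ?thesis using True by auto
    qed auto
    finally show ?thesis using Pair by simp
  qed
  have "osum (pairs (p s)) (\<lambda>(i, j). op_mult (eunit s i j) (slice s i j y)) \<sigma> \<tau> =
     (\<Sum>ij\<in>{..<p s} \<times> {..<p s}. (case ij of (i, j) \<Rightarrow> op_mult (eunit s i j) (slice s i j y)) \<sigma> \<tau>)"
    unfolding osum_def by (rule sum_list_pairs)
  also have "\<dots> = (\<Sum>ij\<in>{..<p s} \<times> {..<p s}. (if ij = (\<sigma> s, \<tau> s) then (if \<sigma> \<in> CC \<and> \<tau> \<in> CC then y \<sigma> \<tau> else 0) else 0))"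
    by (rule sum.cong[OF refl]) (rule tm)
  also have "\<dots> = (if (\<sigma> s, \<tau> s) \<in> {..<p s} \<times> {..<p s} then (if \<sigma> \<in> CC \<and> \<tau> \<in> CC then y \<sigma> \<tau> else 0) else 0)"
    by (rule sum.delta) simp
  also have "\<dots> = y \<sigma> \<tau>"
  proof (cases "\<sigma> \<in> CC \<and> \<tau> \<in> CC")
    case True
    then have "(\<sigma> s, \<tau> s) \<in> {..<p s} \<times> {..<p s}" using ss unfolding cfgs_def by auto
    then show ?thesis using True by simp
  next
    case False then have "y \<sigma> \<tau> = 0" using loc_nz[OF y, of \<sigma> \<tau>] by blast
    then show ?thesis by simp
  qed
  finally show "y \<sigma> \<tau> = osum (pairs (p s)) (\<lambda>(i, j). op_mult (eunit s i j) (slice s i j y)) \<sigma> \<tau>" by simp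
qed


lemma mult_single: assumes x: "loc F x" and r: "\<rho>1 \<in> RR F \<sigma>"
  and z: "\<And>\<rho>. \<rho> \<in> RR F \<sigma> \<Longrightarrow> \<rho> \<noteq> \<rho>1 \<Longrightarrow> x \<sigma> \<rho> * y \<rho> \<tau> = 0"
  shows "op_mult x y \<sigma> \<tau> = x \<sigma> \<rho>1 * y \<rho>1 \<tau>"
proof -
  have "(\<Sum>\<rho>\<in>{\<rho>1}. x \<sigma> \<rho> * y \<rho> \<tau>) = (\<Sum>\<rho>\<in>RR F \<sigma>. x \<sigma> \<rho> * y \<rho> \<tau>)"
    by (rule sum.mono_neutral_left[OF finite_RR'[OF x]]) (use r z in auto)
  then show ?thesis unfolding mult_RR[OF x] by simp
qed

lemma disj_comm: assumes x: "loc F x" and y: "loc G y" and dj: "F \<inter> G = {}"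
  shows "op_mult x y = op_mult y x"
proof (intro ext)
  fix \<sigma> \<tau>
  show "op_mult x y \<sigma> \<tau> = op_mult y x \<sigma> \<tau>"
  proof (cases "\<sigma> \<in> CC \<and> \<tau> \<in> CC \<and> (\<forall>t. t \<notin> F \<union> G \<longrightarrow> \<sigma> t = \<tau> t)")
    case False
    have z1: "x \<sigma> \<rho> * y \<rho> \<tau> = 0" for \<rho>
    proof (rule ccontr)
      assume "x \<sigma> \<rho> * y \<rho> \<tau> \<noteq> 0"
      then have "x \<sigma> \<rho> \<noteq> 0" "y \<rho> \<tau> \<noteq> 0" by auto
      from loc_nz[OF x this(1)] loc_nz[OF y this(2)] False show False by auto
    qed
    have z2: "y \<sigma> \<rho> * x \<rho> \<tau> = 0" for \<rho>
    proof (rule ccontr)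
      assume "y \<sigma> \<rho> * x \<rho> \<tau> \<noteq> 0"
      then have "y \<sigma> \<rho> \<noteq> 0" "x \<rho> \<tau> \<noteq> 0" by auto
      from loc_nz[OF y this(1)] loc_nz[OF x this(2)] False show False by auto
    qed
    have "(\<Sum>\<rho>\<in>RR F \<sigma>. x \<sigma> \<rho> * y \<rho> \<tau>) = 0" by (rule sum.neutral) (use z1 in simp)
    moreover have "(\<Sum>\<rho>\<in>RR G \<sigma>. y \<sigma> \<rho> * x \<rho> \<tau>) = 0" by (rule sum.neutral) (use z2 in simp)
    ultimately show ?thesis unfolding mult_RR[OF x] mult_RR[OF y] by simp
  next
    case True
    then have c: "\<sigma> \<in> CC" "\<tau> \<in> CC" and ag: "\<forall>t. t \<notin> F \<union> G \<longrightarrow> \<sigma> t = \<tau> t" by auto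
    define \<rho>1 where "\<rho>1 = (\<lambda>t. if t \<in> F then \<tau> t else \<sigma> t)"
    define \<rho>2 where "\<rho>2 = (\<lambda>t. if t \<in> G then \<tau> t else \<sigma> t)"
    have c1: "\<rho>1 \<in> CC" "\<rho>2 \<in> CC" unfolding \<rho>1_def \<rho>2_def using mix_CC c by auto
    have r1: "\<rho>1 \<in> RR F \<sigma>" unfolding RR_def using c1 by (simp add: \<rho>1_def)
    have r2: "\<rho>2 \<in> RR G \<sigma>" unfolding RR_def using c1 by (simp add: \<rho>2_def)
    have e1: "op_mult x y \<sigma> \<tau> = x \<sigma> \<rho>1 * y \<rho>1 \<tau>"
    proof (rule mult_single[OF x r1])
      fix \<rho> assume "\<rho> \<in> RR F \<sigma>" "\<rho> \<noteq> \<rho>1"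
      show "x \<sigma> \<rho> * y \<rho> \<tau> = 0"
      proof (rule ccontr)
        assume "x \<sigma> \<rho> * y \<rho> \<tau> \<noteq> 0"
        then have "x \<sigma> \<rho> \<noteq> 0" "y \<rho> \<tau> \<noteq> 0" by auto
        from loc_nz[OF x this(1)] loc_nz[OF y this(2)]
        have "\<forall>t. t \<notin> F \<longrightarrow> \<sigma> t = \<rho> t" "\<forall>t. t \<notin> G \<longrightarrow> \<rho> t = \<tau> t" by auto
        then have "\<rho> = \<rho>1" unfolding \<rho>1_def using dj by (auto simp: fun_eq_iff)
        then show False using \<open>\<rho> \<noteq> \<rho>1\<close> by simp
      qed
    qed
    have e2: "op_mult y x \<sigma> \<tau> = y \<sigma> \<rho>2 * x \<rho>2 \<tau>"
    proof (rule mult_single[OF y r2])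
      fix \<rho> assume "\<rho> \<in> RR G \<sigma>" "\<rho> \<noteq> \<rho>2"
      show "y \<sigma> \<rho> * x \<rho> \<tau> = 0"
      proof (rule ccontr)
        assume "y \<sigma> \<rho> * x \<rho> \<tau> \<noteq> 0"
        then have "y \<sigma> \<rho> \<noteq> 0" "x \<rho> \<tau> \<noteq> 0" by auto
        from loc_nz[OF y this(1)] loc_nz[OF x this(2)]
        have "\<forall>t. t \<notin> G \<longrightarrow> \<sigma> t = \<rho> t" "\<forall>t. t \<notin> F \<longrightarrow> \<rho> t = \<tau> t" by auto
        then have "\<rho> = \<rho>2" unfolding \<rho>2_def using dj by (auto simp: fun_eq_iff)
        then show False using \<open>\<rho> \<noteq> \<rho>2\<close> by simp
      qed
    qed
    have f1: "x \<sigma> \<rho>1 = x \<rho>2 \<tau>"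
    proof (rule loc_eq[OF x c(1) c1(1) c1(2) c(2)])
      show "\<forall>t. t \<notin> F \<longrightarrow> \<sigma> t = \<rho>1 t" by (simp add: \<rho>1_def)
      show "\<forall>t. t \<notin> F \<longrightarrow> \<rho>2 t = \<tau> t" using ag by (simp add: \<rho>2_def)
      show "\<forall>t\<in>F. \<sigma> t = \<rho>2 t \<and> \<rho>1 t = \<tau> t" using dj by (auto simp: \<rho>1_def \<rho>2_def)
    qed
    have f2: "y \<rho>1 \<tau> = y \<sigma> \<rho>2"
    proof (rule loc_eq[OF y c1(1) c(2) c(1) c1(2)])
      show "\<forall>t. t \<notin> G \<longrightarrow> \<rho>1 t = \<tau> t" using ag by (simp add: \<rho>1_def)
      show "\<forall>t. t \<notin> G \<longrightarrow> \<sigma> t = \<rho>2 t" by (simp add: \<rho>2_def)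
      show "\<forall>t\<in>G. \<rho>1 t = \<sigma> t \<and> \<tau> t = \<rho>2 t" using dj by (auto simp: \<rho>1_def \<rho>2_def)
    qed
    show ?thesis unfolding e1 e2 f1 f2 by simp
  qed
qed

lemma add_zero_right: "op_add y op_zero = y"
  by (simp add: op_add_def op_zero_def)

lemma dec_aux: assumes "finite B"
  shows "\<And>y. loc (A \<union> B) y \<Longrightarrow> A \<inter> B = {} \<Longrightarrow>
     \<exists>ab. y = osum ab (\<lambda>(u, v). op_mult u v) \<and> (\<forall>(u, v)\<in>set ab. loc A u \<and> loc B v)"
  using assms
proof (induction B rule: finite_induct)
  case empty
  have fA: "finite A" "A \<subseteq> sites D" using loc_fin[OF empty.prems(1)] loc_sites[OF empty.prems(1)] by auto
  have "y = osum [(y, op_one D p)] (\<lambda>(u, v). op_mult u v)"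
    unfolding osum_Cons osum_Nil add_zero_right using mult_one_right empty.prems(1) by simp
  moreover have "loc A y" using empty.prems(1) by simp
  ultimately show ?case using loc_one by auto
next
  case (insert s B)
  let ?G = "A \<union> insert s B"
  have y: "loc ?G y" by fact
  have sG: "s \<in> ?G" by simp
  have ss: "s \<in> sites D" using loc_sites[OF y] by auto
  have sA: "s \<notin> A" using insert.prems(2) by auto
  have Gs: "?G - {s} = A \<union> B" using insert.hyps(2) sA by auto
  have "\<forall>ij\<in>set (pairs (p s)). \<exists>ab. slice s (fst ij) (snd ij) y = osum ab (\<lambda>(u, v). op_mult u v) \<and>
          (\<forall>(u, v)\<in>set ab. loc A u \<and> loc B v)"
  proof
    fix ij assume "ij \<in> set (pairs (p s))"
    then have ij: "fst ij < p s" "snd ij < p s" unfolding set_pairs by auto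
    have "loc (A \<union> B) (slice s (fst ij) (snd ij) y)" using loc_slice[OF y sG ij] Gs by simp
    then show "\<exists>ab. slice s (fst ij) (snd ij) y = osum ab (\<lambda>(u, v). op_mult u v) \<and>
          (\<forall>(u, v)\<in>set ab. loc A u \<and> loc B v)"
      using insert.IH insert.prems(2) by blast
  qed
  then obtain g where g: "\<And>ij. ij \<in> set (pairs (p s)) \<Longrightarrow> slice s (fst ij) (snd ij) y = osum (g ij) (\<lambda>(u, v). op_mult u v) \<and>
          (\<forall>(u, v)\<in>set (g ij). loc A u \<and> loc B v)"
    by metis
  define ab where "ab = concat (map (\<lambda>ij. map (\<lambda>(u, v). (u, op_mult (eunit s (fst ij) (snd ij)) v)) (g ij)) (pairs (p s)))"
  have "osum ab (\<lambda>(u, v). op_mult u v) =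
     osum (pairs (p s)) (\<lambda>ij. osum (g ij) (\<lambda>uv. op_mult (fst uv) (op_mult (eunit s (fst ij) (snd ij)) (snd uv))))"
    unfolding ab_def osum_concat osum_map by (simp add: case_prod_beta)
  also have "\<dots> = osum (pairs (p s)) (\<lambda>ij. op_mult (eunit s (fst ij) (snd ij)) (slice s (fst ij) (snd ij) y))"
  proof (rule osum_cong)
    fix ij assume ijm: "ij \<in> set (pairs (p s))"
    then have ij: "fst ij < p s" "snd ij < p s" unfolding set_pairs by auto
    let ?e = "eunit s (fst ij) (snd ij)"
    have le: "loc {s} ?e" by (rule loc_unit[OF ss])
    have "osum (g ij) (\<lambda>uv. op_mult (fst uv) (op_mult ?e (snd uv))) = osum (g ij) (\<lambda>uv. op_mult ?e (op_mult (fst uv) (snd uv)))"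
    proof (rule osum_cong)
      fix uv assume "uv \<in> set (g ij)"
      then have lu: "loc A (fst uv)" and lv: "loc B (snd uv)" using g[OF ijm] by (auto simp: case_prod_beta)
      have "op_mult (fst uv) (op_mult ?e (snd uv)) = op_mult (op_mult (fst uv) ?e) (snd uv)"
        by (rule mult_assoc[OF lu le lv, symmetric])
      also have "\<dots> = op_mult (op_mult ?e (fst uv)) (snd uv)"
        using unit_comm[OF lu sA ss ij] by simp
      also have "\<dots> = op_mult ?e (op_mult (fst uv) (snd uv))"
        by (rule mult_assoc[OF le lu lv])
      finally show "op_mult (fst uv) (op_mult ?e (snd uv)) = op_mult ?e (op_mult (fst uv) (snd uv))" .
    qed
    also have "\<dots> = op_mult ?e (osum (g ij) (\<lambda>uv. op_mult (fst uv) (snd uv)))"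
      by (rule mult_osum_right[OF le, symmetric])
    also have "\<dots> = op_mult ?e (slice s (fst ij) (snd ij) y)"
    proof -
      have cp: "(\<lambda>(u, v). op_mult u v) = (\<lambda>uv. op_mult (fst uv) (snd uv))" by (rule ext) (simp add: case_prod_beta)
      show ?thesis unfolding conjunct1[OF g[OF ijm]] cp ..
    qed
    finally show "osum (g ij) (\<lambda>uv. op_mult (fst uv) (op_mult ?e (snd uv))) = op_mult ?e (slice s (fst ij) (snd ij) y)" .
  qed
  also have "\<dots> = y"
  proof -
    have cp2: "(\<lambda>(i, j). op_mult (eunit s i j) (slice s i j y)) = (\<lambda>ij. op_mult (eunit s (fst ij) (snd ij)) (slice s (fst ij) (snd ij) y))"
      by (rule ext) (simp add: case_prod_beta)
    show ?thesis using unit_dec[OF y sG] unfolding cp2 by (rule sym)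
  qed
  finally have e: "y = osum ab (\<lambda>(u, v). op_mult u v)" by simp
  have "\<forall>(u, v)\<in>set ab. loc A u \<and> loc (insert s B) v"
  proof
    fix uv assume "uv \<in> set ab"
    then obtain ij u v where ijm: "ij \<in> set (pairs (p s))" and uvm: "(u, v) \<in> set (g ij)"
      and uv: "uv = (u, op_mult (eunit s (fst ij) (snd ij)) v)"
      unfolding ab_def by auto
    have "loc A u" "loc B v" using g[OF ijm] uvm by auto
    moreover have "loc ({s} \<union> B) (op_mult (eunit s (fst ij) (snd ij)) v)"
      by (rule loc_mult[OF loc_unit[OF ss] \<open>loc B v\<close>])
    ultimately show "case uv of (u, v) \<Rightarrow> loc A u \<and> loc (insert s B) v" using uv by simp
  qed
  then show ?case using e by blast
qed


lemma osum_closed: assumes "op_zero \<in> M" "\<And>a b. a \<in> M \<Longrightarrow> b \<in> M \<Longrightarrow> op_add a b \<in> M"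
  shows "(\<forall>i\<in>set xs. f i \<in> M) \<Longrightarrow> osum xs f \<in> M"
  by (induction xs) (simp_all add: osum_Nil osum_Cons assms)

lemma scale_osum: "op_scale c (osum xs f) = osum xs (\<lambda>i. op_scale c (f i))"
  unfolding osum_def op_scale_def by (intro ext) (simp add: sum_list_const_mult)

lemma sum_pairs_delta: fixes P :: nat shows "(\<Sum>ij\<in>{..<P} \<times> {..<P}. if fst ij = a then h (snd ij) else 0) =
   (if a < P then (\<Sum>j<P. h j) else (0::complex))"
proof -
  have "(\<Sum>ij\<in>{..<P} \<times> {..<P}. if fst ij = a then h (snd ij) else 0) =
        (\<Sum>i<P. \<Sum>j<P. if i = a then h j else 0)"
    by (simp add: sum.cartesian_product case_prod_beta)
  also have "\<dots> = (\<Sum>i<P. if i = a then (\<Sum>j<P. h j) else 0)"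
    by (rule sum.cong[OF refl]) simp
  also have "\<dots> = (if a \<in> {..<P} then (\<Sum>j<P. h j) else 0)" by (rule sum.delta) simp
  finally show ?thesis by simp
qed

context assumes ppos: "\<forall>s\<in>sites D. 0 < p s"
begin

definition avg :: "site \<Rightarrow> op \<Rightarrow> op" where
  "avg s w = osum (pairs (p s)) (\<lambda>ij. op_scale (1 / of_nat (p s))
      (op_mult (op_mult (eunit s (fst ij) (snd ij)) w) (eunit s (snd ij) (fst ij))))"

lemma avg_pt: assumes w: "loc G w" and s: "s \<in> sites D"
  shows "avg s w \<sigma> \<tau> = (if \<sigma> \<in> CC \<and> \<tau> \<in> CC \<and> \<sigma> s = \<tau> s
      then (1 / of_nat (p s)) * (\<Sum>j<p s. w (\<sigma>(s:=j)) (\<tau>(s:=j))) else 0)"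
proof -
  let ?c = "1 / (of_nat (p s) :: complex)"
  have tm: "op_scale ?c (op_mult (op_mult (eunit s (fst ij) (snd ij)) w) (eunit s (snd ij) (fst ij))) \<sigma> \<tau> =
     (if fst ij = \<sigma> s then (if \<sigma> \<in> CC \<and> \<tau> \<in> CC \<and> \<sigma> s = \<tau> s then ?c * w (\<sigma>(s:=snd ij)) (\<tau>(s:=snd ij)) else 0) else 0)"
    if ij: "ij \<in> {..<p s} \<times> {..<p s}" for ij
  proof -
    have i: "fst ij < p s" "snd ij < p s" using ij by auto
    have le: "loc ({s} \<union> G) (op_mult (eunit s (fst ij) (snd ij)) w)" by (rule loc_mult[OF loc_unit[OF s] w])
    show ?thesis unfolding op_scale_def unit_right[OF s i(2) le] unit_left[OF s i(2)] by auto
  qed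
  have "avg s w \<sigma> \<tau> = (\<Sum>ij\<in>{..<p s} \<times> {..<p s}.
      op_scale ?c (op_mult (op_mult (eunit s (fst ij) (snd ij)) w) (eunit s (snd ij) (fst ij))) \<sigma> \<tau>)"
    unfolding avg_def osum_def by (rule sum_list_pairs)
  also have "\<dots> = (\<Sum>ij\<in>{..<p s} \<times> {..<p s}. (if fst ij = \<sigma> s then (if \<sigma> \<in> CC \<and> \<tau> \<in> CC \<and> \<sigma> s = \<tau> s then ?c * w (\<sigma>(s:=snd ij)) (\<tau>(s:=snd ij)) else 0) else 0))"
    by (rule sum.cong[OF refl]) (rule tm)
  also have "\<dots> = (if \<sigma> s < p s then (\<Sum>j<p s. (if \<sigma> \<in> CC \<and> \<tau> \<in> CC \<and> \<sigma> s = \<tau> s then ?c * w (\<sigma>(s:=j)) (\<tau>(s:=j)) else 0)) else 0)"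
    by (rule sum_pairs_delta)
  also have "\<dots> = (if \<sigma> \<in> CC \<and> \<tau> \<in> CC \<and> \<sigma> s = \<tau> s
      then ?c * (\<Sum>j<p s. w (\<sigma>(s:=j)) (\<tau>(s:=j))) else 0)"
  proof (cases "\<sigma> \<in> CC \<and> \<tau> \<in> CC \<and> \<sigma> s = \<tau> s")
    case True then have "\<sigma> s < p s" using s unfolding cfgs_def by auto
    then show ?thesis using True by (simp add: sum_distrib_left)
  next
    case False then show ?thesis by (simp only: if_not_P[OF False] if_False sum.neutral_const if_cancel)
  qed
  finally show ?thesis .
qed

lemma loc_avg: assumes w: "loc G w" and s: "s \<in> sites D" shows "loc (G - {s}) (avg s w)"
proof (rule locI)
  show "finite (G - {s})" "G - {s} \<subseteq> sites D" using loc_fin[OF w] loc_sites[OF w] by auto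
  fix \<sigma> \<tau> assume nz: "avg s w \<sigma> \<tau> \<noteq> 0"
  then have h: "\<sigma> \<in> CC" "\<tau> \<in> CC" "\<sigma> s = \<tau> s" "(\<Sum>j<p s. w (\<sigma>(s:=j)) (\<tau>(s:=j))) \<noteq> 0"
    unfolding avg_pt[OF w s] by (simp_all split: if_splits)
  then obtain j where "w (\<sigma>(s:=j)) (\<tau>(s:=j)) \<noteq> 0" using sum_nz by blast
  from loc_nz[OF w this] have "\<forall>t. t \<notin> G \<longrightarrow> (\<sigma>(s:=j)) t = (\<tau>(s:=j)) t" by blast
  then have "\<forall>t. t \<notin> G - {s} \<longrightarrow> \<sigma> t = \<tau> t" using h(3) by (metis DiffI fun_upd_other singletonD)
  then show "\<sigma> \<in> CC \<and> \<tau> \<in> CC \<and> (\<forall>t. t\<notin>G - {s} \<longrightarrow> \<sigma> t = \<tau> t)" using h by simp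
next
  fix \<sigma> \<tau> \<sigma>' \<tau>' assume c: "\<sigma> \<in> CC" "\<tau> \<in> CC" "\<sigma>' \<in> CC" "\<tau>' \<in> CC"
   and a1: "\<forall>t. t \<notin> G - {s} \<longrightarrow> \<sigma> t = \<tau> t" and a2: "\<forall>t. t \<notin> G - {s} \<longrightarrow> \<sigma>' t = \<tau>' t"
   and a3: "\<forall>t\<in>G - {s}. \<sigma> t = \<sigma>' t \<and> \<tau> t = \<tau>' t"
  have e: "\<sigma> s = \<tau> s" "\<sigma>' s = \<tau>' s" using a1 a2 by auto
  have "(\<Sum>j<p s. w (\<sigma>(s:=j)) (\<tau>(s:=j))) = (\<Sum>j<p s. w (\<sigma>'(s:=j)) (\<tau>'(s:=j)))"
  proof (rule sum.cong[OF refl])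
    fix j assume "j \<in> {..<p s}"
    then have j: "j < p s" by simp
    have c2: "\<sigma>(s:=j) \<in> CC" "\<tau>(s:=j) \<in> CC" "\<sigma>'(s:=j) \<in> CC" "\<tau>'(s:=j) \<in> CC"
      using upd_CC s j c by blast+
    show "w (\<sigma>(s:=j)) (\<tau>(s:=j)) = w (\<sigma>'(s:=j)) (\<tau>'(s:=j))"
    proof (rule loc_eq[OF w c2])
      show "\<forall>t. t \<notin> G \<longrightarrow> (\<sigma>(s:=j)) t = (\<tau>(s:=j)) t" using a1 by auto
      show "\<forall>t. t \<notin> G \<longrightarrow> (\<sigma>'(s:=j)) t = (\<tau>'(s:=j)) t" using a2 by auto
      show "\<forall>t\<in>G. (\<sigma>(s:=j)) t = (\<sigma>'(s:=j)) t \<and> (\<tau>(s:=j)) t = (\<tau>'(s:=j)) t" using a3 by auto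
    qed
  qed
  then show "avg s w \<sigma> \<tau> = avg s w \<sigma>' \<tau>'" unfolding avg_pt[OF w s] using c e by simp
qed

lemma avg_id: assumes w: "loc G w" and s: "s \<in> sites D" "s \<notin> G" shows "avg s w = w"
proof (intro ext)
  fix \<sigma> \<tau>
  show "avg s w \<sigma> \<tau> = w \<sigma> \<tau>"
  proof (cases "\<sigma> \<in> CC \<and> \<tau> \<in> CC \<and> \<sigma> s = \<tau> s")
    case True
    have "(\<Sum>j<p s. w (\<sigma>(s:=j)) (\<tau>(s:=j))) = (\<Sum>j<p s. w \<sigma> \<tau>)"
      by (rule sum.cong[OF refl]) (rule loc_shift[OF w s(2) s(1)], use True in auto)
    moreover have "p s > 0" using ppos s by auto
    moreover have "avg s w \<sigma> \<tau> = (1 / of_nat (p s)) * (\<Sum>j<p s. w (\<sigma>(s:=j)) (\<tau>(s:=j)))"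
      unfolding avg_pt[OF w s(1)] by (rule if_P[OF True])
    ultimately show ?thesis by simp
  next
    case False
    then have "w \<sigma> \<tau> = 0" using loc_nz[OF w, of \<sigma> \<tau>] s(2) by blast
    moreover have "avg s w \<sigma> \<tau> = 0" unfolding avg_pt[OF w s(1)] by (rule if_not_P[OF False])
    ultimately show ?thesis by simp
  qed
qed

lemma avg_mult_right: assumes w: "loc G w" and z: "loc H z" and s: "s \<in> sites D" "s \<notin> H"
  shows "avg s (op_mult w z) = op_mult (avg s w) z"
proof -
  let ?c = "1 / (of_nat (p s) :: complex)"
  let ?K = "({s} \<union> G) \<union> {s}"
  let ?B = "\<lambda>ij. op_scale ?c (op_mult (op_mult (eunit s (fst ij) (snd ij)) w) (eunit s (snd ij) (fst ij)))"
  have eqK: "?K = insert s G" by auto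
  have lB: "loc (insert s G) (?B ij)" for ij
    using loc_scale[OF loc_mult[OF loc_mult[OF loc_unit[OF s(1)] w] loc_unit[OF s(1)]]] unfolding eqK .
  have "avg s (op_mult w z) = osum (pairs (p s)) (\<lambda>ij. op_mult (?B ij) z)"
    unfolding avg_def
  proof (rule osum_cong)
    fix ij assume "ij \<in> set (pairs (p s))"
    then have ij: "fst ij < p s" "snd ij < p s" unfolding set_pairs by auto
    let ?e = "eunit s (fst ij) (snd ij)" and ?e' = "eunit s (snd ij) (fst ij)"
    have le: "loc {s} ?e" "loc {s} ?e'" by (rule loc_unit[OF s(1)])+
    have "op_mult (op_mult ?e (op_mult w z)) ?e' = op_mult (op_mult (op_mult ?e w) z) ?e'"
      using mult_assoc[OF le(1) w z] by simp
    also have "\<dots> = op_mult (op_mult ?e w) (op_mult z ?e')"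
      by (rule mult_assoc[OF loc_mult[OF le(1) w] z le(2)])
    also have "\<dots> = op_mult (op_mult ?e w) (op_mult ?e' z)"
      using unit_comm[OF z s(2) s(1) ij(2) ij(1)] by simp
    also have "\<dots> = op_mult (op_mult (op_mult ?e w) ?e') z"
      by (rule mult_assoc[OF loc_mult[OF le(1) w] le(2) z, symmetric])
    finally have "op_mult (op_mult ?e (op_mult w z)) ?e' = op_mult (op_mult (op_mult ?e w) ?e') z" .
    then show "op_scale ?c (op_mult (op_mult ?e (op_mult w z)) ?e') = op_mult (?B ij) z"
      using mult_scale_left[OF loc_mult[OF loc_mult[OF le(1) w] le(2)]] by simp
  qed
  also have "\<dots> = op_mult (osum (pairs (p s)) ?B) z"
    by (rule mult_osum_left[of "insert s G" "pairs (p s)" ?B z, symmetric]) (use lB loc_fin[OF lB] loc_sites[OF lB] in auto)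
  finally show ?thesis unfolding avg_def .
qed

lemma avg_mult_left: assumes w: "loc G w" and z: "loc H z" and s: "s \<in> sites D" "s \<notin> H"
  shows "avg s (op_mult z w) = op_mult z (avg s w)"
proof -
  let ?c = "1 / (of_nat (p s) :: complex)"
  let ?B = "\<lambda>ij. op_scale ?c (op_mult (op_mult (eunit s (fst ij) (snd ij)) w) (eunit s (snd ij) (fst ij)))"
  have "avg s (op_mult z w) = osum (pairs (p s)) (\<lambda>ij. op_mult z (?B ij))"
    unfolding avg_def
  proof (rule osum_cong)
    fix ij assume "ij \<in> set (pairs (p s))"
    then have ij: "fst ij < p s" "snd ij < p s" unfolding set_pairs by auto
    let ?e = "eunit s (fst ij) (snd ij)" and ?e' = "eunit s (snd ij) (fst ij)"
    have le: "loc {s} ?e" "loc {s} ?e'" by (rule loc_unit[OF s(1)])+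
    have "op_mult (op_mult ?e (op_mult z w)) ?e' = op_mult (op_mult (op_mult ?e z) w) ?e'"
      using mult_assoc[OF le(1) z w] by simp
    also have "\<dots> = op_mult (op_mult (op_mult z ?e) w) ?e'"
      using unit_comm[OF z s(2) s(1) ij] by simp
    also have "\<dots> = op_mult (op_mult z (op_mult ?e w)) ?e'"
      using mult_assoc[OF z le(1) w] by simp
    also have "\<dots> = op_mult z (op_mult (op_mult ?e w) ?e')"
      by (rule mult_assoc[OF z loc_mult[OF le(1) w] le(2)])
    finally have "op_mult (op_mult ?e (op_mult z w)) ?e' = op_mult z (op_mult (op_mult ?e w) ?e')" .
    then show "op_scale ?c (op_mult (op_mult ?e (op_mult z w)) ?e') = op_mult z (?B ij)"
      using mult_scale_right[OF z] by simp
  qed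
  also have "\<dots> = op_mult z (osum (pairs (p s)) ?B)"
    by (rule mult_osum_right[OF z, symmetric])
  finally show ?thesis unfolding avg_def .
qed

lemma avg_osum: assumes fH: "finite H" "H \<subseteq> sites D" and f: "\<forall>i\<in>set xs. loc H (f i)" and s: "s \<in> sites D"
  shows "avg s (osum xs f) = osum xs (\<lambda>i. avg s (f i))"
proof -
  let ?c = "1 / (of_nat (p s) :: complex)"
  have "avg s (osum xs f) = osum (pairs (p s)) (\<lambda>ij. osum xs (\<lambda>i. op_scale ?c
      (op_mult (op_mult (eunit s (fst ij) (snd ij)) (f i)) (eunit s (snd ij) (fst ij)))))"
    unfolding avg_def
  proof (rule osum_cong)
    fix ij assume "ij \<in> set (pairs (p s))"
    let ?e = "eunit s (fst ij) (snd ij)" and ?e' = "eunit s (snd ij) (fst ij)"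
    have le: "loc {s} ?e" by (rule loc_unit[OF s])
    have "op_mult ?e (osum xs f) = osum xs (\<lambda>i. op_mult ?e (f i))" by (rule mult_osum_right[OF le])
    moreover have "op_mult (osum xs (\<lambda>i. op_mult ?e (f i))) ?e' = osum xs (\<lambda>i. op_mult (op_mult ?e (f i)) ?e')"
    proof (rule mult_osum_left)
      show "finite ({s} \<union> H)" "{s} \<union> H \<subseteq> sites D" using fH s by auto
      show "\<forall>i\<in>set xs. loc ({s} \<union> H) (op_mult ?e (f i))" using f loc_mult[OF le] by blast
    qed
    ultimately show "op_scale ?c (op_mult (op_mult ?e (osum xs f)) ?e') =
        osum xs (\<lambda>i. op_scale ?c (op_mult (op_mult ?e (f i)) ?e'))" by (simp add: scale_osum)
  qed
  also have "\<dots> = osum xs (\<lambda>i. osum (pairs (p s)) (\<lambda>ij. op_scale ?c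
      (op_mult (op_mult (eunit s (fst ij) (snd ij)) (f i)) (eunit s (snd ij) (fst ij)))))"
    by (rule osum_swap)
  finally show ?thesis unfolding avg_def .
qed

lemma avg_closed: assumes M: "op_zero \<in> M" "\<And>a b. a \<in> M \<Longrightarrow> b \<in> M \<Longrightarrow> op_add a b \<in> M"
    "\<And>a b. a \<in> M \<Longrightarrow> b \<in> M \<Longrightarrow> op_mult a b \<in> M" "\<And>a c. a \<in> M \<Longrightarrow> op_scale c a \<in> M"
  and U: "\<And>i j. i < p s \<Longrightarrow> j < p s \<Longrightarrow> eunit s i j \<in> M" and w: "w \<in> M"
  shows "avg s w \<in> M"
  unfolding avg_def
proof (rule osum_closed[OF M(1,2)])
  show "\<forall>i\<in>set (pairs (p s)). op_scale (1 / of_nat (p s)) (op_mult (op_mult (eunit s (fst i) (snd i)) w) (eunit s (snd i) (fst i))) \<in> M"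
    unfolding set_pairs using U w M(3,4) by auto
qed

definition EE :: "site list \<Rightarrow> op \<Rightarrow> op" where
  "EE qs w = foldr avg qs w"

lemma EE_Nil: "EE [] w = w" and EE_Cons: "EE (s # qs) w = avg s (EE qs w)"
  by (simp_all add: EE_def)

lemma EE_loc: assumes "set qs \<subseteq> sites D" shows "loc G w \<Longrightarrow> loc (G - set qs) (EE qs w)"
  using assms
proof (induction qs)
  case Nil then show ?case by (simp add: EE_Nil)
next
  case (Cons s qs)
  have "loc (G - set qs - {s}) (avg s (EE qs w))" using Cons by (intro loc_avg) auto
  moreover have "G - set qs - {s} = G - set (s # qs)" by auto
  ultimately show ?case by (simp add: EE_Cons)
qed

lemma EE_loc': assumes "set qs \<subseteq> sites D" "loc G w" shows "loc G (EE qs w)"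
  by (rule loc_mono[OF EE_loc[OF assms]]) (use loc_fin[OF assms(2)] loc_sites[OF assms(2)] in auto)

lemma EE_id: assumes "set qs \<subseteq> sites D" "loc G w" "set qs \<inter> G = {}" shows "EE qs w = w"
  using assms
proof (induction qs)
  case Nil then show ?case by (simp add: EE_Nil)
next
  case (Cons s qs)
  then have "EE qs w = w" by auto
  then show ?case using Cons.prems avg_id[OF Cons.prems(2)] by (simp add: EE_Cons)
qed

lemma EE_right: assumes "set qs \<subseteq> sites D" "loc G w" "loc H z" "set qs \<inter> H = {}"
  shows "EE qs (op_mult w z) = op_mult (EE qs w) z"
  using assms
proof (induction qs)
  case Nil then show ?case by (simp add: EE_Nil)
next
  case (Cons s qs)
  then have "EE qs (op_mult w z) = op_mult (EE qs w) z" by auto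
  moreover have "loc G (EE qs w)" using EE_loc' Cons.prems by auto
  ultimately show ?case using Cons.prems avg_mult_right[OF _ Cons.prems(3)] by (simp add: EE_Cons)
qed

lemma EE_left: assumes "set qs \<subseteq> sites D" "loc G w" "loc H z" "set qs \<inter> H = {}"
  shows "EE qs (op_mult z w) = op_mult z (EE qs w)"
  using assms
proof (induction qs)
  case Nil then show ?case by (simp add: EE_Nil)
next
  case (Cons s qs)
  then have "EE qs (op_mult z w) = op_mult z (EE qs w)" by auto
  moreover have "loc G (EE qs w)" using EE_loc' Cons.prems by auto
  ultimately show ?case using Cons.prems avg_mult_left[OF _ Cons.prems(3)] by (simp add: EE_Cons)
qed

lemma EE_osum: assumes "set qs \<subseteq> sites D" "finite H" "H \<subseteq> sites D" "\<forall>i\<in>set xs. loc H (f i)"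
  shows "EE qs (osum xs f) = osum xs (\<lambda>i. EE qs (f i))"
  using assms
proof (induction qs)
  case Nil then show ?case by (simp add: EE_Nil)
next
  case (Cons s qs)
  then have h1: "EE qs (osum xs f) = osum xs (\<lambda>i. EE qs (f i))" by auto
  have h2: "\<forall>i\<in>set xs. loc H (EE qs (f i))" using EE_loc' Cons.prems by auto
  have "avg s (osum xs (\<lambda>i. EE qs (f i))) = osum xs (\<lambda>i. avg s (EE qs (f i)))"
    by (rule avg_osum[OF Cons.prems(2,3) h2]) (use Cons.prems in simp)
  then show ?case by (simp add: EE_Cons h1)
qed

lemma EE_closed: assumes M: "op_zero \<in> M" "\<And>a b. a \<in> M \<Longrightarrow> b \<in> M \<Longrightarrow> op_add a b \<in> M"
    "\<And>a b. a \<in> M \<Longrightarrow> b \<in> M \<Longrightarrow> op_mult a b \<in> M" "\<And>a c. a \<in> M \<Longrightarrow> op_scale c a \<in> M"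
  and U: "\<And>s i j. s \<in> set qs \<Longrightarrow> i < p s \<Longrightarrow> j < p s \<Longrightarrow> eunit s i j \<in> M" and w: "w \<in> M"
  shows "EE qs w \<in> M"
  using U
proof (induction qs)
  case Nil then show ?case using w by (simp add: EE_Nil)
next
  case (Cons s qs)
  then have h: "EE qs w \<in> M" by auto
  show ?case unfolding EE_Cons by (rule avg_closed[OF M _ h]) (use Cons.prems in auto)
qed

end


lemma Supp_sub: "loc F x \<Longrightarrow> Supp D p x \<subseteq> F"
  unfolding Supp_def by (rule Inter_lower) simp

lemma loc_Supp: assumes x: "loc F x" shows "loc (Supp D p x) x"
proof -
  let ?A = "{G. loc G x \<and> G \<subseteq> F}"
  have fin: "finite ?A"
    by (rule finite_subset[of _ "Pow F"]) (use loc_fin[OF x] in auto)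
  have ne: "?A \<noteq> {}" using x by auto
  obtain m where m: "m \<in> ?A" and mmin: "\<forall>b\<in>?A. b \<le> m \<longrightarrow> m = b"
    using finite_has_minimal[OF fin ne] by blast
  have "m \<subseteq> G" if "loc G x" for G
  proof -
    have "loc (m \<inter> G) x" using loc_inter m that by blast
    then have "m \<inter> G \<in> ?A" using m by auto
    then have "m = m \<inter> G" using mmin by blast
    then show ?thesis by blast
  qed
  then have "m \<subseteq> Supp D p x" unfolding Supp_def by blast
  moreover have "Supp D p x \<subseteq> m" using Supp_sub m by blast
  ultimately show ?thesis using m by simp
qed

end

lemma foldr_max_le: "foldr max xs (0::int) \<le> c \<longleftrightarrow> 0 \<le> c \<and> (\<forall>x\<in>set xs. x \<le> c)"
  by (induction xs) auto

lemma dist_le: "site_dist s t \<le> c \<longleftrightarrow> 0 \<le> c \<and> (\<forall>(a, b)\<in>set (zip s t). \<bar>a - b\<bar> \<le> c)"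
  unfolding site_dist_def foldr_max_le by auto

lemma dist_nth: assumes "length s = length t"
  shows "site_dist s t \<le> c \<longleftrightarrow> 0 \<le> c \<and> (\<forall>k<length s. \<bar>s!k - t!k\<bar> \<le> c)"
  unfolding dist_le set_zip using assms by auto

lemma dist_sym: "site_dist s t = site_dist t s"
proof -
  have "map (\<lambda>(a, b). \<bar>a - b\<bar>) (zip s t) = map (\<lambda>(a, b). \<bar>a - b\<bar>) (zip t s)"
  proof (induction s arbitrary: t)
    case Nil then show ?case by simp
  next
    case (Cons a s) then show ?case by (cases t) (simp_all add: abs_minus_commute)
  qed
  then show ?thesis unfolding site_dist_def by simp
qed

lemma dist_tri: assumes "length s = length t" "length t = length u" "site_dist s t \<le> a" "site_dist t u \<le> b"
  shows "site_dist s u \<le> a + b"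
proof -
  have h1: "0 \<le> a" "\<forall>k<length s. \<bar>s!k - t!k\<bar> \<le> a" using assms(3) dist_nth[OF assms(1)] by auto
  have h2: "0 \<le> b" "\<forall>k<length t. \<bar>t!k - u!k\<bar> \<le> b" using assms(4) dist_nth[OF assms(2)] by auto
  have "\<forall>k<length s. \<bar>s!k - u!k\<bar> \<le> a + b"
  proof (intro allI impI)
    fix k assume k: "k < length s"
    have "\<bar>s!k - t!k\<bar> \<le> a" "\<bar>t!k - u!k\<bar> \<le> b" using h1 h2 k assms(1) by auto
    then show "\<bar>s!k - u!k\<bar> \<le> a + b" by linarith
  qed
  then show ?thesis using dist_nth[of s u] assms(1,2) h1(1) h2(1) by auto
qed

lemma dist_hd: assumes "s \<noteq> []" "t \<noteq> []" "site_dist s t \<le> c" shows "\<bar>hd s - hd t\<bar> \<le> c"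
proof -
  obtain x s' y t' where "s = x # s'" "t = y # t'" using assms(1,2) by (meson list.exhaust)
  then show ?thesis using assms(3) unfolding dist_le by auto
qed

lemma dist_tl: assumes "site_dist s t \<le> c" shows "site_dist (tl s) (tl t) \<le> c"
proof -
  have c: "0 \<le> c" using assms unfolding dist_le by auto
  have "set (zip (tl s) (tl t)) \<subseteq> set (zip s t)"
  proof (cases s)
    case (Cons x s') then show ?thesis by (cases t) (auto)
  qed simp
  then show ?thesis using assms c unfolding dist_le by blast
qed

lemma nbhd_mono: "F \<subseteq> G \<Longrightarrow> nbhd D l F \<subseteq> nbhd D l G"
  unfolding nbhd_def by blast


context fixes D :: nat and p :: "site \<Rightarrow> nat" and l :: int and \<alpha> :: "op \<Rightarrow> op"
  assumes D1: "D \<ge> 1" and ppos: "\<forall>s\<in>sites D. 0 < p s" and Q: "is_QCA D p l \<alpha>"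
begin

abbreviation "lc \<equiv> local_on D p"
abbreviation "MM \<equiv> Mat D p (sites D)"

lemma Mat_iff: "x \<in> Mat D p X \<longleftrightarrow> (\<exists>F. F \<subseteq> X \<and> lc F x)"
  unfolding Mat_def using loc_fin by blast

lemma MM_iff: "x \<in> MM \<longleftrightarrow> (\<exists>F. lc F x)"
  unfolding Mat_iff using loc_sites by blast

lemma Q_l: "l > 0" using Q unfolding is_QCA_def by (elim conjE)
lemma Q_bij: "bij_betw \<alpha> MM MM" using Q unfolding is_QCA_def by (elim conjE)
lemma Q_one: "\<alpha> (op_one D p) = op_one D p" using Q unfolding is_QCA_def by (elim conjE)

lemma Q_hom: assumes "x \<in> MM" "y \<in> MM"
  shows "\<alpha> (op_add x y) = op_add (\<alpha> x) (\<alpha> y)" "\<alpha> (op_mult x y) = op_mult (\<alpha> x) (\<alpha> y)"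
proof -
  have H: "\<forall>x\<in>MM. \<forall>y\<in>MM. \<alpha> (op_add x y) = op_add (\<alpha> x) (\<alpha> y) \<and> \<alpha> (op_mult x y) = op_mult (\<alpha> x) (\<alpha> y)"
    using Q unfolding is_QCA_def by (elim conjE)
  show "\<alpha> (op_add x y) = op_add (\<alpha> x) (\<alpha> y)" "\<alpha> (op_mult x y) = op_mult (\<alpha> x) (\<alpha> y)"
    using H assms by blast+
qed

lemma Q_scale: assumes "x \<in> MM" shows "\<alpha> (op_scale c x) = op_scale c (\<alpha> x)"
proof -
  have H: "\<forall>x\<in>MM. \<forall>c. \<alpha> (op_scale c x) = op_scale c (\<alpha> x)"
    using Q unfolding is_QCA_def by (elim conjE)
  show ?thesis using H assms by blast
qed

lemma Q_adj: assumes "x \<in> MM" shows "\<alpha> (op_adj x) = op_adj (\<alpha> x)"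
proof -
  have H: "\<forall>x\<in>MM. \<alpha> (op_adj x) = op_adj (\<alpha> x)"
    using Q unfolding is_QCA_def by (elim conjE)
  show ?thesis using H assms by blast
qed

lemma Q_spread: assumes "x \<in> MM" shows "Supp D p (\<alpha> x) \<subseteq> nbhd D l (Supp D p x)"
proof -
  have H: "\<forall>x\<in>MM. Supp D p (\<alpha> x) \<subseteq> nbhd D l (Supp D p x)"
    using Q unfolding is_QCA_def by (elim conjE)
  show ?thesis using H assms by blast
qed

lemma loc_MM: "lc F x \<Longrightarrow> x \<in> MM" using MM_iff by blast

lemma \<alpha>_MM: "x \<in> MM \<Longrightarrow> \<alpha> x \<in> MM"
  using Q_bij bij_betwE by blast

lemma \<alpha>_inj: "x \<in> MM \<Longrightarrow> y \<in> MM \<Longrightarrow> \<alpha> x = \<alpha> y \<Longrightarrow> x = y"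
  using Q_bij bij_betw_imp_inj_on inj_onD by metis

definition \<beta> where "\<beta> = inv_into MM \<alpha>"

lemma \<beta>_MM: "x \<in> MM \<Longrightarrow> \<beta> x \<in> MM"
  unfolding \<beta>_def using Q_bij bij_betw_inv_into bij_betwE by blast

lemma \<alpha>_\<beta>: "x \<in> MM \<Longrightarrow> \<alpha> (\<beta> x) = x"
  unfolding \<beta>_def using Q_bij bij_betw_inv_into_right by metis

lemma \<alpha>_loc: assumes "lc F x" shows "lc (Supp D p (\<alpha> x)) (\<alpha> x)" "Supp D p (\<alpha> x) \<subseteq> nbhd D l F"
proof -
  have "\<alpha> x \<in> MM" using \<alpha>_MM loc_MM assms by blast
  then obtain G where "lc G (\<alpha> x)" using MM_iff by blast
  then show "lc (Supp D p (\<alpha> x)) (\<alpha> x)" by (rule loc_Supp)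
  have "Supp D p (\<alpha> x) \<subseteq> nbhd D l (Supp D p x)" using Q_spread loc_MM assms by blast
  also have "\<dots> \<subseteq> nbhd D l F" by (rule nbhd_mono[OF Supp_sub[OF assms]])
  finally show "Supp D p (\<alpha> x) \<subseteq> nbhd D l F" .
qed

lemma \<alpha>_zero: "\<alpha> op_zero = op_zero"
proof -
  have z: "op_zero \<in> MM" using loc_MM[OF loc_zero[of "{}" D p]] by simp
  have "\<alpha> op_zero = \<alpha> (op_add op_zero op_zero)" by (simp add: op_add_def op_zero_def)
  also have "\<dots> = op_add (\<alpha> op_zero) (\<alpha> op_zero)" by (rule Q_hom(1)[OF z z])
  finally have "\<And>\<sigma> \<tau>. \<alpha> op_zero \<sigma> \<tau> = \<alpha> op_zero \<sigma> \<tau> + \<alpha> op_zero \<sigma> \<tau>"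
    unfolding op_add_def by metis
  then show ?thesis unfolding op_zero_def by (intro ext) simp
qed

lemma MM_add: "x \<in> MM \<Longrightarrow> y \<in> MM \<Longrightarrow> op_add x y \<in> MM"
proof -
  assume "x \<in> MM" "y \<in> MM"
  then obtain F G where F: "lc F x" and G: "lc G y" using MM_iff by blast
  have fin: "finite (F \<union> G)" "F \<union> G \<subseteq> sites D" using loc_fin[OF F] loc_fin[OF G] loc_sites[OF F] loc_sites[OF G] by auto
  have "lc (F \<union> G) x" "lc (F \<union> G) y" by (rule loc_mono[OF F _ fin], simp, rule loc_mono[OF G _ fin], simp)
  then show ?thesis using loc_add loc_MM by blast
qed

lemma \<alpha>_osum: "(\<forall>i\<in>set xs. f i \<in> MM) \<Longrightarrow> \<alpha> (osum xs f) = osum xs (\<lambda>i. \<alpha> (f i))"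
proof (induction xs)
  case Nil then show ?case by (simp add: osum_Nil \<alpha>_zero)
next
  case (Cons a xs)
  have m: "osum xs f \<in> MM"
    by (rule osum_closed[where M=MM]) (use loc_MM[OF loc_zero[of "{}" D p]] MM_add Cons.prems in auto)
  show ?case unfolding osum_Cons using Q_hom(1)[OF _ m] Cons by simp
qed

lemma comm_back: assumes "x \<in> MM" "y \<in> MM" "op_mult (\<alpha> x) (\<alpha> y) = op_mult (\<alpha> y) (\<alpha> x)"
  shows "op_mult x y = op_mult y x"
proof -
  obtain F G where F: "lc F x" and G: "lc G y" using MM_iff assms by blast
  have "op_mult x y \<in> MM" "op_mult y x \<in> MM" using loc_mult[OF F G] loc_mult[OF G F] loc_MM by blast+
  moreover have "\<alpha> (op_mult x y) = \<alpha> (op_mult y x)" using Q_hom(2) assms by simp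
  ultimately show ?thesis using \<alpha>_inj by blast
qed

lemma gen_inv: assumes x: "lc F x"
  and far: "\<And>t f. t \<in> sites D \<Longrightarrow> t \<notin> K \<Longrightarrow> f \<in> F \<Longrightarrow> site_dist t f > l"
  shows "\<exists>G. G \<subseteq> K \<and> lc G (\<beta> x)"
proof -
  have xM: "x \<in> MM" by (rule loc_MM[OF x])
  let ?y = "\<beta> x"
  have yM: "?y \<in> MM" by (rule \<beta>_MM[OF xM])
  have ay: "\<alpha> ?y = x" by (rule \<alpha>_\<beta>[OF xM])
  obtain G0 where G0: "lc G0 ?y" using MM_iff yM by blast
  let ?X = "G0 - K"
  have "lc (G0 - ?X) ?y"
  proof (rule remove_sites[OF _ G0])
    show "finite ?X" using loc_fin[OF G0] by simp
    show "?X \<subseteq> sites D" using loc_sites[OF G0] by auto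
    fix t i j assume t: "t \<in> ?X" and ij: "i < p t" "j < p t"
    have ts: "t \<in> sites D" using t loc_sites[OF G0] by auto
    let ?e = "eunit D p t i j"
    have le: "lc {t} ?e" by (rule loc_unit[OF ts])
    have eM: "?e \<in> MM" by (rule loc_MM[OF le])
    have la: "lc (Supp D p (\<alpha> ?e)) (\<alpha> ?e)" and sa: "Supp D p (\<alpha> ?e) \<subseteq> nbhd D l {t}"
      using \<alpha>_loc[OF le] by auto
    have dj: "Supp D p (\<alpha> ?e) \<inter> F = {}"
    proof (rule ccontr)
      assume "Supp D p (\<alpha> ?e) \<inter> F \<noteq> {}"
      then obtain f where f: "f \<in> F" "f \<in> nbhd D l {t}" using sa by blast
      then have "site_dist t f \<le> l" unfolding nbhd_def by auto
      moreover have "site_dist t f > l" using far[OF ts _ f(1)] t by blast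
      ultimately show False by simp
    qed
    have "op_mult (\<alpha> ?e) x = op_mult x (\<alpha> ?e)" by (rule disj_comm[OF la x dj])
    then have "op_mult (\<alpha> ?e) (\<alpha> ?y) = op_mult (\<alpha> ?y) (\<alpha> ?e)" using ay by simp
    then show "op_mult ?e ?y = op_mult ?y ?e" by (rule comm_back[OF eM yM])
  qed
  moreover have "G0 - ?X \<subseteq> K" by auto
  ultimately show ?thesis by blast
qed

lemma site_cons: "t \<in> sites D \<Longrightarrow> t \<noteq> []" using D1 unfolding sites_def by auto

lemma hd_far: assumes "t \<in> sites D" "f \<in> sites D" "\<bar>hd t - hd f\<bar> > l" shows "site_dist t f > l"
proof (rule ccontr)
  assume "\<not> site_dist t f > l"
  then have "site_dist t f \<le> l" by simp
  then have "\<bar>hd t - hd f\<bar> \<le> l" using dist_hd site_cons assms by blast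
  then show False using assms(3) by simp
qed

definition RH :: "int \<Rightarrow> site set" where "RH n = {s \<in> sites D. n < hd s}"

lemma unit_left_alg: assumes s: "s \<in> sites D" "hd s \<le> n - l" and ij: "i < p s" "j < p s"
  shows "eunit D p s i j \<in> \<alpha> ` Mat D p (half_space D n)"
proof -
  let ?e = "eunit D p s i j"
  have le: "lc {s} ?e" by (rule loc_unit[OF s(1)])
  obtain G where G: "G \<subseteq> half_space D n" "lc G (\<beta> ?e)"
  proof (rule exE[OF gen_inv[OF le]])
    fix t f assume t: "t \<in> sites D" "t \<notin> half_space D n" and f: "f \<in> {s}"
    then have "hd t > n" unfolding half_space_def by auto
    then show "site_dist t f > l" using hd_far[OF t(1), of f] f s by auto
  qed auto
  then have "\<beta> ?e \<in> Mat D p (half_space D n)" unfolding Mat_iff by blast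
  moreover have "\<alpha> (\<beta> ?e) = ?e" by (rule \<alpha>_\<beta>[OF loc_MM[OF le]])
  ultimately show ?thesis by force
qed

lemma unit_right_alg: assumes s: "s \<in> sites D" "n + l + 1 \<le> hd s" and ij: "i < p s" "j < p s"
  shows "eunit D p s i j \<in> \<alpha> ` Mat D p (RH n)"
proof -
  let ?e = "eunit D p s i j"
  have le: "lc {s} ?e" by (rule loc_unit[OF s(1)])
  obtain G where G: "G \<subseteq> RH n" "lc G (\<beta> ?e)"
  proof (rule exE[OF gen_inv[OF le]])
    fix t f assume t: "t \<in> sites D" "t \<notin> RH n" and f: "f \<in> {s}"
    then have "hd t \<le> n" unfolding RH_def by auto
    then show "site_dist t f > l" using hd_far[OF t(1), of f] f s by auto
  qed auto
  then have "\<beta> ?e \<in> Mat D p (RH n)" unfolding Mat_iff by blast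
  moreover have "\<alpha> (\<beta> ?e) = ?e" by (rule \<alpha>_\<beta>[OF loc_MM[OF le]])
  ultimately show ?thesis by force
qed


lemma Mat_sub: "Mat D p X \<subseteq> MM"
proof
  fix x assume "x \<in> Mat D p X"
  then obtain F where "lc F x" unfolding Mat_iff by blast
  then show "x \<in> MM" by (rule loc_MM)
qed

lemma Mat_zero: "op_zero \<in> Mat D p X"
proof -
  have "lc {} op_zero" by (rule loc_zero) simp_all
  moreover have "{} \<subseteq> X" by simp
  ultimately show ?thesis unfolding Mat_iff by blast
qed

lemma Mat_one: "op_one D p \<in> Mat D p X"
proof -
  have "lc {} (op_one D p)" by (rule loc_one)
  moreover have "{} \<subseteq> X" by simp
  ultimately show ?thesis unfolding Mat_iff by blast
qed

lemma Mat_bin: assumes "a \<in> Mat D p X" "b \<in> Mat D p X"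
  shows "op_add a b \<in> Mat D p X" "op_mult a b \<in> Mat D p X"
proof -
  obtain F where F: "F \<subseteq> X" "lc F a" using assms(1) unfolding Mat_iff by blast
  obtain G where G: "G \<subseteq> X" "lc G b" using assms(2) unfolding Mat_iff by blast
  have fin: "finite (F \<union> G)" "F \<union> G \<subseteq> sites D" using loc_fin[OF F(2)] loc_fin[OF G(2)] loc_sites[OF F(2)] loc_sites[OF G(2)] by auto
  have l1: "lc (F \<union> G) a" by (rule loc_mono[OF F(2) _ fin]) simp
  have l2: "lc (F \<union> G) b" by (rule loc_mono[OF G(2) _ fin]) simp
  have FG: "F \<union> G \<subseteq> X" using F(1) G(1) by simp
  have "lc (F \<union> G) (op_add a b)" by (rule loc_add[OF l1 l2])
  then show "op_add a b \<in> Mat D p X" using FG unfolding Mat_iff by blast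
  have "lc (F \<union> G) (op_mult a b)" by (rule loc_mult[OF F(2) G(2)])
  then show "op_mult a b \<in> Mat D p X" using FG unfolding Mat_iff by blast
qed

lemma Mat_un: assumes "a \<in> Mat D p X"
  shows "op_scale c a \<in> Mat D p X" "op_adj a \<in> Mat D p X"
proof -
  obtain F where F: "F \<subseteq> X" "lc F a" using assms unfolding Mat_iff by blast
  have "lc F (op_scale c a)" by (rule loc_scale[OF F(2)])
  then show "op_scale c a \<in> Mat D p X" using F(1) unfolding Mat_iff by blast
  have "lc F (op_adj a)" by (rule loc_adj[OF F(2)])
  then show "op_adj a \<in> Mat D p X" using F(1) unfolding Mat_iff by blast
qed

lemma A_zero: "op_zero \<in> \<alpha> ` Mat D p X" by (rule image_eqI[where f=\<alpha>, OF \<alpha>_zero[symmetric] Mat_zero])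
lemma A_one: "op_one D p \<in> \<alpha> ` Mat D p X" by (rule image_eqI[where f=\<alpha>, OF Q_one[symmetric] Mat_one])

lemma A_bin: assumes "a \<in> \<alpha> ` Mat D p X" "b \<in> \<alpha> ` Mat D p X"
  shows "op_add a b \<in> \<alpha> ` Mat D p X" "op_mult a b \<in> \<alpha> ` Mat D p X"
proof -
  obtain u v where u: "u \<in> Mat D p X" "a = \<alpha> u" and v: "v \<in> Mat D p X" "b = \<alpha> v" using assms by blast
  have uv: "u \<in> MM" "v \<in> MM" using u v Mat_sub by blast+
  have e1: "op_add a b = \<alpha> (op_add u v)" using Q_hom(1)[OF uv] u(2) v(2) by simp
  have e2: "op_mult a b = \<alpha> (op_mult u v)" using Q_hom(2)[OF uv] u(2) v(2) by simp
  show "op_add a b \<in> \<alpha> ` Mat D p X" by (rule image_eqI[where f=\<alpha>, OF e1 Mat_bin(1)[OF u(1) v(1)]])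
  show "op_mult a b \<in> \<alpha> ` Mat D p X" by (rule image_eqI[where f=\<alpha>, OF e2 Mat_bin(2)[OF u(1) v(1)]])
qed

lemma A_un: assumes "a \<in> \<alpha> ` Mat D p X"
  shows "op_scale c a \<in> \<alpha> ` Mat D p X" "op_adj a \<in> \<alpha> ` Mat D p X"
proof -
  obtain u where u: "u \<in> Mat D p X" "a = \<alpha> u" using assms by blast
  have uM: "u \<in> MM" using u Mat_sub by blast
  have e1: "op_scale c a = \<alpha> (op_scale c u)" using Q_scale[OF uM] u(2) by simp
  have e2: "op_adj a = \<alpha> (op_adj u)" using Q_adj[OF uM] u(2) by simp
  show "op_scale c a \<in> \<alpha> ` Mat D p X" by (rule image_eqI[where f=\<alpha>, OF e1 Mat_un(1)[OF u(1)]])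
  show "op_adj a \<in> \<alpha> ` Mat D p X" by (rule image_eqI[where f=\<alpha>, OF e2 Mat_un(2)[OF u(1)]])
qed

lemma nb_sites: "t \<in> nbhd D l X \<Longrightarrow> t \<in> sites D" unfolding nbhd_def by auto

lemma nb_hd: assumes "t \<in> nbhd D l X" "X \<subseteq> sites D"
  obtains s where "s \<in> X" "\<bar>hd s - hd t\<bar> \<le> l"
proof -
  obtain s where s: "s \<in> X" "site_dist s t \<le> l" using assms(1) unfolding nbhd_def by auto
  have "s \<noteq> []" "t \<noteq> []" using site_cons nb_sites[OF assms(1)] s(1) assms(2) by auto
  then have "\<bar>hd s - hd t\<bar> \<le> l" using dist_hd[OF _ _ s(2)] by blast
  then show ?thesis using that s by blast
qed

lemma gL: assumes "X \<subseteq> half_space D n" "t \<in> nbhd D l X" shows "hd t \<le> n + l"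
proof -
  have "X \<subseteq> sites D" using assms(1) unfolding half_space_def by auto
  then obtain s where "s \<in> X" "\<bar>hd s - hd t\<bar> \<le> l" using nb_hd assms(2) by blast
  moreover have "hd s \<le> n" using assms(1) \<open>s \<in> X\<close> unfolding half_space_def by auto
  ultimately show ?thesis by linarith
qed

lemma gR: assumes "X \<subseteq> RH n" "t \<in> nbhd D l X" shows "n + 1 - l \<le> hd t"
proof -
  have "X \<subseteq> sites D" using assms(1) unfolding RH_def by auto
  then obtain s where "s \<in> X" "\<bar>hd s - hd t\<bar> \<le> l" using nb_hd assms(2) by blast
  moreover have "n < hd s" using assms(1) \<open>s \<in> X\<close> unfolding RH_def by auto
  ultimately show ?thesis by linarith
qed

lemma g2: assumes "X \<subseteq> nbhd D l F" "F \<subseteq> sites D" "t \<in> nbhd D l X"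
  shows "tl t \<in> nbhd (D - 1) (2 * l) (tl ` F)"
proof -
  obtain s where s: "s \<in> X" "site_dist s t \<le> l" using assms(3) unfolding nbhd_def by auto
  obtain f where f: "f \<in> F" "site_dist f s \<le> l" using assms(1) s(1) unfolding nbhd_def by auto
  have len: "length f = D" "length s = D" "length t = D"
    using f(1) assms(2) s(1) assms(1) nb_sites[OF assms(3)] unfolding nbhd_def sites_def by auto
  have "site_dist f t \<le> l + l" by (rule dist_tri[OF _ _ f(2) s(2)]) (use len in auto)
  then have "site_dist (tl f) (tl t) \<le> l + l" by (rule dist_tl)
  then have "site_dist (tl f) (tl t) \<le> 2 * l" by simp
  moreover have "tl t \<in> sites (D - 1)" using len unfolding sites_def by simp
  ultimately show ?thesis unfolding nbhd_def using f(1) by blast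
qed

lemma main_result: "invertible_strip_subalg D p n l (boundary_algebra D p \<alpha> n l) (2 * l)"
proof -
  let ?L = "half_space D n" and ?R = "RH n" and ?S = "strip D n l"
  let ?B = "boundary_algebra D p \<alpha> n l"
  have Bdef: "?B = \<alpha> ` Mat D p ?L \<inter> Mat D p ?S" unfolding boundary_algebra_def ..
  have usa: "unital_star_subalg D p (Mat D p ?S) ?B"
    unfolding unital_star_subalg_def Bdef
  proof (intro conjI ballI allI)
    show "\<alpha> ` Mat D p ?L \<inter> Mat D p ?S \<subseteq> Mat D p ?S" by (rule Int_lower2)
    show "op_one D p \<in> \<alpha> ` Mat D p ?L \<inter> Mat D p ?S" using A_one Mat_one by (rule IntI)
  next
    fix a b assume a: "a \<in> \<alpha> ` Mat D p ?L \<inter> Mat D p ?S" and b: "b \<in> \<alpha> ` Mat D p ?L \<inter> Mat D p ?S"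
    have a1: "a \<in> \<alpha> ` Mat D p ?L" "a \<in> Mat D p ?S" using a by auto
    have b1: "b \<in> \<alpha> ` Mat D p ?L" "b \<in> Mat D p ?S" using b by auto
    show "op_add a b \<in> \<alpha> ` Mat D p ?L \<inter> Mat D p ?S" using A_bin(1)[OF a1(1) b1(1)] Mat_bin(1)[OF a1(2) b1(2)] by (rule IntI)
    show "op_mult a b \<in> \<alpha> ` Mat D p ?L \<inter> Mat D p ?S" using A_bin(2)[OF a1(1) b1(1)] Mat_bin(2)[OF a1(2) b1(2)] by (rule IntI)
  next
    fix a c assume a: "a \<in> \<alpha> ` Mat D p ?L \<inter> Mat D p ?S"
    have a1: "a \<in> \<alpha> ` Mat D p ?L" "a \<in> Mat D p ?S" using a by auto
    show "op_scale c a \<in> \<alpha> ` Mat D p ?L \<inter> Mat D p ?S" using A_un(1)[OF a1(1)] Mat_un(1)[OF a1(2)] by (rule IntI)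
  next
    fix a assume a: "a \<in> \<alpha> ` Mat D p ?L \<inter> Mat D p ?S"
    have a1: "a \<in> \<alpha> ` Mat D p ?L" "a \<in> Mat D p ?S" using a by auto
    show "op_adj a \<in> \<alpha> ` Mat D p ?L \<inter> Mat D p ?S" using A_un(2)[OF a1(1)] Mat_un(2)[OF a1(2)] by (rule IntI)
  qed
  have dec: "\<exists>ab :: (op \<times> op) list.
        x = op_sum_prods ab \<and>
        (\<forall>(a, b)\<in>set ab.
           a \<in> ?B \<and>
           b \<in> Mat D p ?S \<and> (\<forall>a'\<in>?B. op_mult a' b = op_mult b a') \<and>
           tl ` Supp D p a \<subseteq> nbhd (D - 1) (2 * l) (tl ` Supp D p x) \<and>
           tl ` Supp D p b \<subseteq> nbhd (D - 1) (2 * l) (tl ` Supp D p x))"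
    if xS: "x \<in> Mat D p ?S" for x
  proof -
    obtain F0 where F0: "F0 \<subseteq> ?S" "lc F0 x" using xS unfolding Mat_iff by blast
    define F where "F = Supp D p x"
    have lF: "lc F x" unfolding F_def by (rule loc_Supp[OF F0(2)])
    have FS: "F \<subseteq> ?S" unfolding F_def using Supp_sub[OF F0(2)] F0(1) by blast
    have Fs: "F \<subseteq> sites D" by (rule loc_sites[OF lF])
    obtain G where G: "G \<subseteq> nbhd D l F" "lc G (\<beta> x)"
    proof (rule exE[OF gen_inv[OF lF]])
      fix t f assume t: "t \<in> sites D" "t \<notin> nbhd D l F" and f: "f \<in> F"
      show "site_dist t f > l"
      proof (rule ccontr)
        assume "\<not> site_dist t f > l"
        then have "site_dist f t \<le> l" using dist_sym[of t f] by simp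
        then have "t \<in> nbhd D l F" unfolding nbhd_def using t(1) f by blast
        then show False using t(2) by simp
      qed
    qed auto
    let ?y = "\<beta> x"
    have xM: "x \<in> MM" by (rule loc_MM[OF lF])
    define A where "A = G \<inter> ?L"
    define Bs where "Bs = G - ?L"
    have AB: "A \<union> Bs = G" "A \<inter> Bs = {}" unfolding A_def Bs_def by auto
    have AL: "A \<subseteq> ?L" unfolding A_def by auto
    have BR: "Bs \<subseteq> ?R" unfolding Bs_def RH_def half_space_def using loc_sites[OF G(2)] by auto
    have AG: "A \<subseteq> G" "Bs \<subseteq> G" unfolding A_def Bs_def by auto
    have finB: "finite Bs" using loc_fin[OF G(2)] unfolding Bs_def by simp
    have lAB: "lc (A \<union> Bs) ?y" using G(2) AB(1) by simp
    obtain ab0 where ab0: "?y = osum ab0 (\<lambda>(u, v). op_mult u v)"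
      and ab0l: "\<forall>(u, v)\<in>set ab0. lc A u \<and> lc Bs v"
      using dec_aux[OF finB lAB AB(2)] by blast
    have lu: "lc A (fst uv)" "lc Bs (snd uv)" if "uv \<in> set ab0" for uv using ab0l that by auto
    define Su where "Su = (\<lambda>uv::op \<times> op. Supp D p (\<alpha> (fst uv)))"
    define Sv where "Sv = (\<lambda>uv::op \<times> op. Supp D p (\<alpha> (snd uv)))"
    have lSu: "lc (Su uv) (\<alpha> (fst uv))" "Su uv \<subseteq> nbhd D l A" if "uv \<in> set ab0" for uv
      unfolding Su_def using \<alpha>_loc[OF lu(1)[OF that]] by auto
    have lSv: "lc (Sv uv) (\<alpha> (snd uv))" "Sv uv \<subseteq> nbhd D l Bs" if "uv \<in> set ab0" for uv
      unfolding Sv_def using \<alpha>_loc[OF lu(2)[OF that]] by auto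
    define U where "U = (\<Union>uv\<in>set ab0. Su uv \<union> Sv uv)"
    have finU: "finite U" unfolding U_def
    proof (rule finite_UN_I)
      show "finite (set ab0)" by simp
      fix uv assume "uv \<in> set ab0"
      then show "finite (Su uv \<union> Sv uv)" using loc_fin[OF lSu(1)] loc_fin[OF lSv(1)] by simp
    qed
    have Us: "U \<subseteq> sites D" unfolding U_def
    proof (rule UN_least)
      fix uv assume "uv \<in> set ab0"
      then show "Su uv \<union> Sv uv \<subseteq> sites D" using loc_sites[OF lSu(1)] loc_sites[OF lSv(1)] by simp
    qed
    have SuU: "Su uv \<subseteq> U" "Sv uv \<subseteq> U" if "uv \<in> set ab0" for uv unfolding U_def using that by auto
    have "finite {t \<in> U. hd t \<le> n - l}" "finite {t \<in> U. n + l + 1 \<le> hd t}" using finU by simp_all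
    then obtain qL qR where qL: "set qL = {t \<in> U. hd t \<le> n - l}" and qR: "set qR = {t \<in> U. n + l + 1 \<le> hd t}"
      using finite_list by metis
    have qLs: "set qL \<subseteq> sites D" "set qR \<subseteq> sites D" using qL qR Us by auto
    have hSu: "hd t \<le> n + l" if "uv \<in> set ab0" "t \<in> Su uv" for uv t
      using gL[OF AL] lSu(2)[OF that(1)] that(2) by blast
    have hSv: "n + 1 - l \<le> hd t" if "uv \<in> set ab0" "t \<in> Sv uv" for uv t
      using gR[OF BR] lSv(2)[OF that(1)] that(2) by blast
    have djR: "set qR \<inter> Su uv = {}" if "uv \<in> set ab0" for uv
    proof -
      have "\<And>t. t \<in> Su uv \<Longrightarrow> t \<notin> set qR" using hSu[OF that] unfolding qR by fastforce
      then show ?thesis by blast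
    qed
    have djL: "set qL \<inter> Sv uv = {}" if "uv \<in> set ab0" for uv
    proof -
      have "\<And>t. t \<in> Sv uv \<Longrightarrow> t \<notin> set qL" using hSv[OF that] unfolding qL by fastforce
      then show ?thesis by blast
    qed
    have djF: "set qL \<inter> F = {}" "set qR \<inter> F = {}" using FS qL qR unfolding strip_def by auto
    define a where "a = (\<lambda>u. EE D p qL (\<alpha> u))"
    define b where "b = (\<lambda>v. EE D p qR (\<alpha> v))"
    define ab where "ab = map (\<lambda>uv. (a (fst uv), b (snd uv))) ab0"
    have lb: "lc (Sv uv) (b (snd uv))" if "uv \<in> set ab0" for uv
      unfolding b_def by (rule EE_loc'[OF ppos qLs(2) lSv(1)[OF that]])
    have uvM: "fst uv \<in> MM" "snd uv \<in> MM" if "uv \<in> set ab0" for uv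
      using loc_MM lu[OF that] by blast+
    have h0: "x = osum ab0 (\<lambda>uv. op_mult (\<alpha> (fst uv)) (\<alpha> (snd uv)))"
    proof -
      have "x = \<alpha> ?y" using \<alpha>_\<beta>[OF xM] by simp
      also have "\<dots> = osum ab0 (\<lambda>uv. \<alpha> (case uv of (u, v) \<Rightarrow> op_mult u v))"
        unfolding ab0
      proof (rule \<alpha>_osum, rule ballI)
        fix uv assume uv: "uv \<in> set ab0"
        have "lc (A \<union> Bs) (op_mult (fst uv) (snd uv))" by (rule loc_mult[OF lu(1)[OF uv] lu(2)[OF uv]])
        then have "op_mult (fst uv) (snd uv) \<in> MM" by (rule loc_MM)
        then show "(case uv of (u, v) \<Rightarrow> op_mult u v) \<in> MM" by (simp add: case_prod_beta)
      qed
      also have "\<dots> = osum ab0 (\<lambda>uv. op_mult (\<alpha> (fst uv)) (\<alpha> (snd uv)))"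
        by (rule osum_cong) (use uvM Q_hom(2) in \<open>auto simp: case_prod_beta\<close>)
      finally show ?thesis .
    qed
    have lprod: "lc U (op_mult (\<alpha> (fst uv)) (\<alpha> (snd uv)))" "lc U (op_mult (\<alpha> (fst uv)) (b (snd uv)))"
      if "uv \<in> set ab0" for uv
    proof -
      have "Su uv \<union> Sv uv \<subseteq> U" using SuU[OF that] by auto
      then show "lc U (op_mult (\<alpha> (fst uv)) (\<alpha> (snd uv)))" "lc U (op_mult (\<alpha> (fst uv)) (b (snd uv)))"
        using loc_mono[OF loc_mult[OF lSu(1)[OF that] lSv(1)[OF that]] _ finU Us]
          loc_mono[OF loc_mult[OF lSu(1)[OF that] lb[OF that]] _ finU Us] by auto
    qed
    have "x = EE D p qL (EE D p qR x)"
      using EE_id[OF ppos qLs(2) lF djF(2)] EE_id[OF ppos qLs(1) lF djF(1)] by simp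
    also have "EE D p qR x = osum ab0 (\<lambda>uv. EE D p qR (op_mult (\<alpha> (fst uv)) (\<alpha> (snd uv))))"
      by (subst h0, rule EE_osum[OF ppos qLs(2) finU Us]) (use lprod in auto)
    also have "\<dots> = osum ab0 (\<lambda>uv. op_mult (\<alpha> (fst uv)) (b (snd uv)))"
    proof (rule osum_cong)
      fix uv assume uv: "uv \<in> set ab0"
      show "EE D p qR (op_mult (\<alpha> (fst uv)) (\<alpha> (snd uv))) = op_mult (\<alpha> (fst uv)) (b (snd uv))"
        unfolding b_def by (rule EE_left[OF ppos qLs(2) lSv(1)[OF uv] lSu(1)[OF uv] djR[OF uv]])
    qed
    also have "EE D p qL \<dots> = osum ab0 (\<lambda>uv. EE D p qL (op_mult (\<alpha> (fst uv)) (b (snd uv))))"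
      by (rule EE_osum[OF ppos qLs(1) finU Us]) (use lprod in auto)
    also have "\<dots> = osum ab0 (\<lambda>uv. op_mult (a (fst uv)) (b (snd uv)))"
    proof (rule osum_cong)
      fix uv assume uv: "uv \<in> set ab0"
      show "EE D p qL (op_mult (\<alpha> (fst uv)) (b (snd uv))) = op_mult (a (fst uv)) (b (snd uv))"
        unfolding a_def by (rule EE_right[OF ppos qLs(1) lSu(1)[OF uv] lb[OF uv] djL[OF uv]])
    qed
    also have "\<dots> = op_sum_prods ab"
      unfolding op_sum_prods_osum ab_def osum_map by (simp add: case_prod_beta)
    finally have xe: "x = op_sum_prods ab" .
    have props: "a (fst uv) \<in> ?B \<and> b (snd uv) \<in> Mat D p ?S \<and> (\<forall>a'\<in>?B. op_mult a' (b (snd uv)) = op_mult (b (snd uv)) a') \<and>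
           tl ` Supp D p (a (fst uv)) \<subseteq> nbhd (D - 1) (2 * l) (tl ` Supp D p x) \<and>
           tl ` Supp D p (b (snd uv)) \<subseteq> nbhd (D - 1) (2 * l) (tl ` Supp D p x)"
      if uv: "uv \<in> set ab0" for uv
    proof -
      have fu: "fst uv \<in> Mat D p ?L" using lu(1)[OF uv] AL unfolding Mat_iff by blast
      have sv: "snd uv \<in> Mat D p ?R" using lu(2)[OF uv] BR unfolding Mat_iff by blast
      have aA: "a (fst uv) \<in> \<alpha> ` Mat D p ?L"
        unfolding a_def
        by (rule EE_closed[OF ppos A_zero A_bin(1) A_bin(2) A_un(1)])
          (use unit_left_alg qL Us fu in auto)
      have bA: "b (snd uv) \<in> \<alpha> ` Mat D p ?R"
        unfolding b_def
        by (rule EE_closed[OF ppos A_zero A_bin(1) A_bin(2) A_un(1)])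
          (use unit_right_alg qR Us sv in auto)
      have la: "lc (Su uv - set qL) (a (fst uv))" unfolding a_def by (rule EE_loc[OF ppos qLs(1) lSu(1)[OF uv]])
      have lb2: "lc (Sv uv - set qR) (b (snd uv))" unfolding b_def by (rule EE_loc[OF ppos qLs(2) lSv(1)[OF uv]])
      have aS: "Su uv - set qL \<subseteq> ?S"
      proof
        fix t assume t: "t \<in> Su uv - set qL"
        then have "t \<in> U" "hd t \<le> n + l" using SuU[OF uv] hSu[OF uv] by auto
        moreover have "\<not> hd t \<le> n - l" using t \<open>t \<in> U\<close> qL by auto
        ultimately show "t \<in> ?S" unfolding strip_def using Us by auto
      qed
      have bS: "Sv uv - set qR \<subseteq> ?S"
      proof
        fix t assume t: "t \<in> Sv uv - set qR"
        then have "t \<in> U" "n + 1 - l \<le> hd t" using SuU[OF uv] hSv[OF uv] by auto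
        moreover have "\<not> n + l + 1 \<le> hd t" using t \<open>t \<in> U\<close> qR by auto
        ultimately show "t \<in> ?S" unfolding strip_def using Us by auto
      qed
      have aM: "a (fst uv) \<in> Mat D p ?S" using la aS unfolding Mat_iff by blast
      have bM: "b (snd uv) \<in> Mat D p ?S" using lb2 bS unfolding Mat_iff by blast
      have ta: "tl ` Supp D p (a (fst uv)) \<subseteq> nbhd (D - 1) (2 * l) (tl ` Supp D p x)"
      proof -
        have "Supp D p (a (fst uv)) \<subseteq> nbhd D l G"
          using Supp_sub[OF la] lSu(2)[OF uv] nbhd_mono[OF AG(1)] by blast
        then show ?thesis using g2[OF G(1) Fs] unfolding F_def by blast
      qed
      have tb: "tl ` Supp D p (b (snd uv)) \<subseteq> nbhd (D - 1) (2 * l) (tl ` Supp D p x)"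
      proof -
        have "Supp D p (b (snd uv)) \<subseteq> nbhd D l G"
          using Supp_sub[OF lb2] lSv(2)[OF uv] nbhd_mono[OF AG(2)] by blast
        then show ?thesis using g2[OF G(1) Fs] unfolding F_def by blast
      qed
      have cm: "op_mult a' (b (snd uv)) = op_mult (b (snd uv)) a'" if a': "a' \<in> ?B" for a'
      proof -
        obtain u' where u': "u' \<in> Mat D p ?L" "a' = \<alpha> u'" using a' Bdef by blast
        obtain v' where v': "v' \<in> Mat D p ?R" "b (snd uv) = \<alpha> v'" using bA by blast
        obtain F1 where F1: "F1 \<subseteq> ?L" "lc F1 u'" using u'(1) Mat_iff by blast
        obtain F2 where F2: "F2 \<subseteq> ?R" "lc F2 v'" using v'(1) Mat_iff by blast
        have "F1 \<inter> F2 = {}"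
        proof (rule ccontr)
          assume "F1 \<inter> F2 \<noteq> {}"
          then obtain z where z: "z \<in> F1" "z \<in> F2" by blast
          have "hd z \<le> n" using F1(1) z(1) unfolding half_space_def by blast
          moreover have "n < hd z" using F2(1) z(2) unfolding RH_def by blast
          ultimately show False by simp
        qed
        then have "op_mult u' v' = op_mult v' u'" by (rule disj_comm[OF F1(2) F2(2)])
        then show ?thesis using u'(2) v'(2) Q_hom(2) loc_MM[OF F1(2)] loc_MM[OF F2(2)] by metis
      qed
      show ?thesis using aA aM bM ta tb cm unfolding Bdef by blast
    qed
    show ?thesis
    proof (rule exI[of _ ab], rule conjI[OF xe], rule ballI)
      fix e assume "e \<in> set ab"
      then obtain uv where uv: "uv \<in> set ab0" and e: "e = (a (fst uv), b (snd uv))" unfolding ab_def by auto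
      show "case e of (a, b) \<Rightarrow>
           a \<in> ?B \<and>
           b \<in> Mat D p ?S \<and> (\<forall>a'\<in>?B. op_mult a' b = op_mult b a') \<and>
           tl ` Supp D p a \<subseteq> nbhd (D - 1) (2 * l) (tl ` Supp D p x) \<and>
           tl ` Supp D p b \<subseteq> nbhd (D - 1) (2 * l) (tl ` Supp D p x)"
        unfolding e using props[OF uv] by simp
    qed
  qed
  show ?thesis unfolding invertible_strip_subalg_def using usa dec by blast
qed

end

theorem lemma3p6:
  fixes D :: nat and p :: "site \<Rightarrow> nat" and \<alpha> :: "op \<Rightarrow> op" and l n :: int
  assumes "D \<ge> 1"
    and "\<forall>s\<in>sites D. p s > 0"
    and "is_QCA D p l \<alpha>"
    and "l > 1"
  shows "invertible_strip_subalg D p n l (boundary_algebra D p \<alpha> n l) (2 * l)"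
  by (rule main_result[OF assms(1,2,3)])

end
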